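(* For every atomic flow $A$ there is an atomic flow $B$ such that $A\to_{\mathsf c}^\star B$ and every $\mathsf{ai}$-cycle in $B$ is a fragile cycle.
   Context: An atomic flow is a tuple $(V,E,\eta,up,lo)$: finite sets of vertices and edges, a labelling of vertices by interaction, cut, weakening, coweakening, contraction or cocontraction, and maps $up:E\to V\cup\{\top\}$, $lo:E\to V\cup\{\bot\}$. Upper edges of $\nu$: $lo(\epsilon)=\nu$; lower edges: $up(\epsilon)=\nu$. (Upper, lower) edge numbers: $(0,2)$ interaction, $(2,0)$ cut, $(0,1)$ weakening, $(1,0)$ coweakening, $(2,1)$ contraction, $(1,2)$ cocontraction; no directed cycles; there is $\pi:E\to\{+,-\}$ giving all edges of a (co)contraction the same sign and the two edges of an interaction/cut different signs. A path from $\nu$ to $\nu'$ is a sequence of edges $\epsilon_1,\dots,\epsilon_h$ with $lo(\epsilon_i)=up(\epsilon_{i+1})$, $up(\epsilon_1)=\nu$, $lo(\epsilon_h)=\nu'$; its reversal is a path from $\nu'$ to $\nu$. An $\mathsf{ai}$-path from $\nu$ to $\nu'$ is either a path from $\nu$ to $\nu'$ or a sequence $\epsilon_1,\dots,\epsilon_k,\epsilon_{k+1},\dots,\epsilon_h$ with $\epsilon_k\neq\epsilon_{k+1}$ such that, for some interaction or cut vertex $\nu''$, $\epsilon_1,\dots,\epsilon_k$ is an $\mathsf{ai}$-path from $\nu$ to $\nu''$ and $\epsilon_{k+1},\dots,\epsilon_h$ is an $\mathsf{ai}$-path from $\nu''$ to $\nu'$. An $\mathsf{ai}$-cycle is an $\mathsf{ai}$-path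 from a vertex to itself in which no edge appears twice. A simple edge is an edge whose upper endpoint is an interaction and whose lower endpoint is a cut. A fragile cycle is an $\mathsf{ai}$-cycle containing a simple edge. $\to_{\mathsf c}^\star$ is the reflexive-transitive closure of $\to_{\mathsf c}$, where $A\to_{\mathsf c}B$ means $B$ results from $A$ by one of these subgraph replacements: (c1) a contraction with upper edges $\epsilon_1,\epsilon_2$ whose lower edge is an upper edge of a cut with other upper edge $\epsilon_3$: replace by a new cocontraction with upper edge $\epsilon_3$ and new lower edges $\delta_1,\delta_2$, and two new cuts with upper edges $\{\epsilon_1,\delta_1\}$ and $\{\epsilon_2,\delta_2\}$; (c2) an interaction with lower edges $\epsilon_3,\epsilon_4$ where $\epsilon_4$ is the upper edge of a cocontraction with lower edges $\epsilon_1,\epsilon_2$: replace by a new contraction with lower edge $\epsilon_3$ and new upper edges $\delta_1,\delta_2$, and two new interactions with lower edges $\{\epsilon_1,\delta_1\}$ and $\{\epsilon_2,\delta_2\}$; (c3) a contraction with upper edges $\epsilon_1,\epsilon_2$ whose lower edge is the upper edge of a cocontraction with lower edges $\epsilon_3,\epsilon_4$: replace by cocontractions $\kappa_1,\kappa_2$ with upper edges $\epsilon_1,\epsilon_2$, contractions $\gamma_3,\gamma_4$ with lower edges $\epsilon_3,\epsilon_4$, and four new edges, one from each $\kappa_i$ to each $\gamma_j$. *)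

theory Defs
  imports Main
begin

text \<open>Vertices and edges are natural numbers (so that the rewriting
steps can always pick fresh names). The endpoints of an edge are of type node:
Top stands for the upper boundary, Bot for the lower boundary, Nd v for vertex v.\<close>

datatype kind = Interaction | Cut | Weakening | Coweakening | Contraction | Cocontraction

datatype node = Top | Bot | Nd nat

record flow =
  fV :: "nat set"
  fE :: "nat set"
  lab :: "nat \<Rightarrow> kind"
  up :: "nat \<Rightarrow> node"
  lo :: "nat \<Rightarrow> node"

fun n_upper :: "kind \<Rightarrow> nat" where
  "n_upper Interaction = 0"
| "n_upper Cut = 2"
| "n_upper Weakening = 0"
| "n_upper Coweakening = 1"
| "n_upper Contraction = 2"
| "n_upper Cocontraction = 1"

fun n_lower :: "kind \<Rightarrow> nat" where
  "n_lower Interaction = 2"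
| "n_lower Cut = 0"
| "n_lower Weakening = 1"
| "n_lower Coweakening = 0"
| "n_lower Contraction = 1"
| "n_lower Cocontraction = 2"

definition upper_edges :: "flow \<Rightarrow> nat \<Rightarrow> nat set" where
  "upper_edges G v = {e \<in> fE G. lo G e = Nd v}"

definition lower_edges :: "flow \<Rightarrow> nat \<Rightarrow> nat set" where
  "lower_edges G v = {e \<in> fE G. up G e = Nd v}"

definition atomic_flow :: "flow \<Rightarrow> bool" where
  "atomic_flow G \<longleftrightarrow>
     finite (fV G) \<and> finite (fE G) \<and>
     (\<forall>e\<in>fE G. up G e \<in> insert Top (Nd ` fV G) \<and> lo G e \<in> insert Bot (Nd ` fV G)) \<and>
     (\<forall>v\<in>fV G. card (upper_edges G v) = n_upper (lab G v) \<and>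
                card (lower_edges G v) = n_lower (lab G v)) \<and>
     acyclic {(u, w). \<exists>e\<in>fE G. up G e = Nd u \<and> lo G e = Nd w} \<and>
     (\<exists>\<pi> :: nat \<Rightarrow> bool.
        \<forall>v\<in>fV G.
          (lab G v \<in> {Contraction, Cocontraction} \<longrightarrow>
             (\<forall>e\<in>upper_edges G v \<union> lower_edges G v. \<forall>e'\<in>upper_edges G v \<union> lower_edges G v.
                \<pi> e = \<pi> e')) \<and>
          (lab G v \<in> {Interaction, Cut} \<longrightarrow>
             (\<forall>e\<in>upper_edges G v \<union> lower_edges G v. \<forall>e'\<in>upper_edges G v \<union> lower_edges G v.
                e \<noteq> e' \<longrightarrow> \<pi> e \<noteq> \<pi> e')))"

definition dpath :: "flow \<Rightarrow> nat \<Rightarrow> nat list \<Rightarrow> nat \<Rightarrow> bool" where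
  "dpath G v xs w \<longleftrightarrow> xs \<noteq> [] \<and> set xs \<subseteq> fE G \<and>
     up G (hd xs) = Nd v \<and> lo G (last xs) = Nd w \<and>
     (\<forall>i. Suc i < length xs \<longrightarrow> lo G (xs ! i) = up G (xs ! Suc i))"

definition path :: "flow \<Rightarrow> nat \<Rightarrow> nat list \<Rightarrow> nat \<Rightarrow> bool" where
  "path G v xs w \<longleftrightarrow> dpath G v xs w \<or> dpath G w (rev xs) v"

inductive aipath :: "flow \<Rightarrow> nat \<Rightarrow> nat list \<Rightarrow> nat \<Rightarrow> bool" for G where
  base: "path G v xs w \<Longrightarrow> aipath G v xs w"
| join: "aipath G v xs u \<Longrightarrow> aipath G u ys w \<Longrightarrow> u \<in> fV G \<Longrightarrow>
         lab G u \<in> {Interaction, Cut} \<Longrightarrow> last xs \<noteq> hd ys \<Longrightarrow> aipath G v (xs @ ys) w"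

definition aicycle :: "flow \<Rightarrow> nat \<Rightarrow> nat list \<Rightarrow> bool" where
  "aicycle G v xs \<longleftrightarrow> v \<in> fV G \<and> aipath G v xs v \<and> distinct xs"

definition simple_edge :: "flow \<Rightarrow> nat \<Rightarrow> bool" where
  "simple_edge G e \<longleftrightarrow> e \<in> fE G \<and>
     (\<exists>u w. u \<in> fV G \<and> w \<in> fV G \<and> up G e = Nd u \<and> lab G u = Interaction \<and>
            lo G e = Nd w \<and> lab G w = Cut)"

definition fragile_cycle :: "flow \<Rightarrow> nat \<Rightarrow> nat list \<Rightarrow> bool" where
  "fragile_cycle G v xs \<longleftrightarrow> aicycle G v xs \<and> (\<exists>e\<in>set xs. simple_edge G e)"

definition c1_step :: "flow \<Rightarrow> flow \<Rightarrow> bool" where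
  "c1_step A B \<longleftrightarrow> (\<exists>g k e1 e2 e e3 k' x1 x2 d1 d2.
     g \<in> fV A \<and> lab A g = Contraction \<and> k \<in> fV A \<and> lab A k = Cut \<and>
     e1 \<in> fE A \<and> e2 \<in> fE A \<and> e1 \<noteq> e2 \<and> lo A e1 = Nd g \<and> lo A e2 = Nd g \<and>
     e \<in> fE A \<and> up A e = Nd g \<and> lo A e = Nd k \<and>
     e3 \<in> fE A \<and> e3 \<noteq> e \<and> lo A e3 = Nd k \<and>
     k' \<notin> fV A \<and> x1 \<notin> fV A \<and> x2 \<notin> fV A \<and> distinct [k', x1, x2] \<and>
     d1 \<notin> fE A \<and> d2 \<notin> fE A \<and> d1 \<noteq> d2 \<and>
     B = A\<lparr> fV := (fV A - {g, k}) \<union> {k', x1, x2},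
            fE := (fE A - {e}) \<union> {d1, d2},
            lab := (lab A)(k' := Cocontraction, x1 := Cut, x2 := Cut),
            up := (up A)(d1 := Nd k', d2 := Nd k'),
            lo := (lo A)(e3 := Nd k', e1 := Nd x1, d1 := Nd x1, e2 := Nd x2, d2 := Nd x2) \<rparr>)"

definition c2_step :: "flow \<Rightarrow> flow \<Rightarrow> bool" where
  "c2_step A B \<longleftrightarrow> (\<exists>i k e1 e2 e3 e4 g' i1 i2 d1 d2.
     i \<in> fV A \<and> lab A i = Interaction \<and> k \<in> fV A \<and> lab A k = Cocontraction \<and>
     e3 \<in> fE A \<and> e4 \<in> fE A \<and> e3 \<noteq> e4 \<and> up A e3 = Nd i \<and> up A e4 = Nd i \<and>
     lo A e4 = Nd k \<and>
     e1 \<in> fE A \<and> e2 \<in> fE A \<and> e1 \<noteq> e2 \<and> up A e1 = Nd k \<and> up A e2 = Nd k \<and>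
     g' \<notin> fV A \<and> i1 \<notin> fV A \<and> i2 \<notin> fV A \<and> distinct [g', i1, i2] \<and>
     d1 \<notin> fE A \<and> d2 \<notin> fE A \<and> d1 \<noteq> d2 \<and>
     B = A\<lparr> fV := (fV A - {i, k}) \<union> {g', i1, i2},
            fE := (fE A - {e4}) \<union> {d1, d2},
            lab := (lab A)(g' := Contraction, i1 := Interaction, i2 := Interaction),
            up := (up A)(e3 := Nd g', e1 := Nd i1, d1 := Nd i1, e2 := Nd i2, d2 := Nd i2),
            lo := (lo A)(d1 := Nd g', d2 := Nd g') \<rparr>)"

definition c3_step :: "flow \<Rightarrow> flow \<Rightarrow> bool" where
  "c3_step A B \<longleftrightarrow> (\<exists>g k e1 e2 e e3 e4 k1 k2 g3 g4 d13 d14 d23 d24.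
     g \<in> fV A \<and> lab A g = Contraction \<and> k \<in> fV A \<and> lab A k = Cocontraction \<and>
     e1 \<in> fE A \<and> e2 \<in> fE A \<and> e1 \<noteq> e2 \<and> lo A e1 = Nd g \<and> lo A e2 = Nd g \<and>
     e \<in> fE A \<and> up A e = Nd g \<and> lo A e = Nd k \<and>
     e3 \<in> fE A \<and> e4 \<in> fE A \<and> e3 \<noteq> e4 \<and> up A e3 = Nd k \<and> up A e4 = Nd k \<and>
     k1 \<notin> fV A \<and> k2 \<notin> fV A \<and> g3 \<notin> fV A \<and> g4 \<notin> fV A \<and> distinct [k1, k2, g3, g4] \<and>
     d13 \<notin> fE A \<and> d14 \<notin> fE A \<and> d23 \<notin> fE A \<and> d24 \<notin> fE A \<and> distinct [d13, d14, d23, d24] \<and>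
     B = A\<lparr> fV := (fV A - {g, k}) \<union> {k1, k2, g3, g4},
            fE := (fE A - {e}) \<union> {d13, d14, d23, d24},
            lab := (lab A)(k1 := Cocontraction, k2 := Cocontraction,
                           g3 := Contraction, g4 := Contraction),
            up := (up A)(e3 := Nd g3, e4 := Nd g4,
                         d13 := Nd k1, d14 := Nd k1, d23 := Nd k2, d24 := Nd k2),
            lo := (lo A)(e1 := Nd k1, e2 := Nd k2,
                         d13 := Nd g3, d14 := Nd g4, d23 := Nd g3, d24 := Nd g4) \<rparr>)"

definition c_step :: "flow \<Rightarrow> flow \<Rightarrow> bool" where
  "c_step A B \<longleftrightarrow> c1_step A B \<or> c2_step A B \<or> c3_step A B"

end

theory Submission
  imports Defs
begin


definition wfl :: "flow \<Rightarrow> bool" where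
  "wfl G \<longleftrightarrow> finite (fV G) \<and> finite (fE G) \<and>
     (\<forall>e\<in>fE G. up G e \<in> insert Top (Nd ` fV G) \<and> lo G e \<in> insert Bot (Nd ` fV G)) \<and>
     (\<forall>v\<in>fV G. card (upper_edges G v) = n_upper (lab G v) \<and>
                card (lower_edges G v) = n_lower (lab G v))"

definition polar :: "flow \<Rightarrow> (nat \<Rightarrow> bool) \<Rightarrow> bool" where
  "polar G \<pi> \<longleftrightarrow> (\<forall>v\<in>fV G.
          (lab G v \<in> {Contraction, Cocontraction} \<longrightarrow>
             (\<forall>e\<in>upper_edges G v \<union> lower_edges G v. \<forall>e'\<in>upper_edges G v \<union> lower_edges G v.
                \<pi> e = \<pi> e')) \<and>
          (lab G v \<in> {Interaction, Cut} \<longrightarrow>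
             (\<forall>e\<in>upper_edges G v \<union> lower_edges G v. \<forall>e'\<in>upper_edges G v \<union> lower_edges G v.
                e \<noteq> e' \<longrightarrow> \<pi> e \<noteq> \<pi> e')))"

definition grel :: "flow \<Rightarrow> (nat \<times> nat) set" where
  "grel G = {(u, w). \<exists>e\<in>fE G. up G e = Nd u \<and> lo G e = Nd w}"

lemma atomic_iff: "atomic_flow G \<longleftrightarrow> wfl G \<and> acyclic (grel G) \<and> (\<exists>\<pi>. polar G \<pi>)"
  unfolding atomic_flow_def wfl_def polar_def grel_def by blast

lemma wf_upV: "wfl G \<Longrightarrow> e \<in> fE G \<Longrightarrow> up G e = Nd u \<Longrightarrow> u \<in> fV G"
  unfolding wfl_def by fastforce
lemma wf_loV: "wfl G \<Longrightarrow> e \<in> fE G \<Longrightarrow> lo G e = Nd u \<Longrightarrow> u \<in> fV G"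
  unfolding wfl_def by fastforce
lemma wf_up_nBot: "wfl G \<Longrightarrow> e \<in> fE G \<Longrightarrow> up G e \<noteq> Bot"
  unfolding wfl_def by fastforce
lemma wf_lo_nTop: "wfl G \<Longrightarrow> e \<in> fE G \<Longrightarrow> lo G e \<noteq> Top"
  unfolding wfl_def by fastforce
lemma wf_cardU: "wfl G \<Longrightarrow> v \<in> fV G \<Longrightarrow> card (upper_edges G v) = n_upper (lab G v)"
  unfolding wfl_def by blast
lemma wf_cardL: "wfl G \<Longrightarrow> v \<in> fV G \<Longrightarrow> card (lower_edges G v) = n_lower (lab G v)"
  unfolding wfl_def by blast
lemma wf_finU: "wfl G \<Longrightarrow> finite (upper_edges G v)"
  unfolding wfl_def upper_edges_def by auto
lemma wf_finL: "wfl G \<Longrightarrow> finite (lower_edges G v)"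
  unfolding wfl_def lower_edges_def by auto

lemma upper_edgesI: "e \<in> fE G \<Longrightarrow> lo G e = Nd v \<Longrightarrow> e \<in> upper_edges G v"
  unfolding upper_edges_def by auto
lemma lower_edgesI: "e \<in> fE G \<Longrightarrow> up G e = Nd v \<Longrightarrow> e \<in> lower_edges G v"
  unfolding lower_edges_def by auto

lemma card_pos_mem: "finite A \<Longrightarrow> x \<in> A \<Longrightarrow> card A \<noteq> 0"
  by auto
lemma card_two_mem: "finite A \<Longrightarrow> x \<in> A \<Longrightarrow> y \<in> A \<Longrightarrow> x \<noteq> y \<Longrightarrow> card A \<ge> 2"
proof -
  assume "finite A" "x \<in> A" "y \<in> A" "x \<noteq> y"
  then have "{x,y} \<subseteq> A" by auto
  then have "card {x,y} \<le> card A" using \<open>finite A\<close> card_mono by blast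
  then show ?thesis using \<open>x\<noteq>y\<close> by simp
qed

lemma pass_CK:
  assumes "wfl G" "v \<in> fV G" "x \<in> upper_edges G v" "y \<in> lower_edges G v"
  shows "lab G v \<in> {Contraction, Cocontraction}"
proof -
  have "n_upper (lab G v) \<noteq> 0" using wf_cardU[OF assms(1,2)] card_pos_mem[OF wf_finU[OF assms(1)] assms(3)] by auto
  moreover have "n_lower (lab G v) \<noteq> 0" using wf_cardL[OF assms(1,2)] card_pos_mem[OF wf_finL[OF assms(1)] assms(4)] by auto
  ultimately show ?thesis by (cases "lab G v") auto
qed

lemma two_upper:
  assumes "wfl G" "v \<in> fV G" "x \<in> upper_edges G v" "y \<in> upper_edges G v" "x \<noteq> y"
  shows "lab G v \<in> {Cut, Contraction}"
proof -
  have "n_upper (lab G v) \<ge> 2" using wf_cardU[OF assms(1,2)] card_two_mem[OF wf_finU[OF assms(1)] assms(3-5)] by auto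
  then show ?thesis by (cases "lab G v") auto
qed

lemma two_lower:
  assumes "wfl G" "v \<in> fV G" "x \<in> lower_edges G v" "y \<in> lower_edges G v" "x \<noteq> y"
  shows "lab G v \<in> {Interaction, Cocontraction}"
proof -
  have "n_lower (lab G v) \<ge> 2" using wf_cardL[OF assms(1,2)] card_two_mem[OF wf_finL[OF assms(1)] assms(3-5)] by auto
  then show ?thesis by (cases "lab G v") auto
qed

lemma polar_same:
  assumes "polar G \<pi>" "v \<in> fV G" "lab G v \<in> {Contraction, Cocontraction}"
    "x \<in> upper_edges G v \<union> lower_edges G v" "y \<in> upper_edges G v \<union> lower_edges G v"
  shows "\<pi> x = \<pi> y"
  using assms unfolding polar_def by blast

lemma polar_diff:
  assumes "polar G \<pi>" "v \<in> fV G" "lab G v \<in> {Interaction, Cut}"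
    "x \<in> upper_edges G v \<union> lower_edges G v" "y \<in> upper_edges G v \<union> lower_edges G v" "x \<noteq> y"
  shows "\<pi> x \<noteq> \<pi> y"
  using assms unfolding polar_def by blast

definition c1_red :: "flow \<Rightarrow> (nat \<Rightarrow> bool) \<Rightarrow> bool" where
  "c1_red G \<pi> \<longleftrightarrow> (\<exists>g e k. g \<in> fV G \<and> lab G g = Contraction \<and> e \<in> fE G \<and> up G e = Nd g \<and>
      lo G e = Nd k \<and> k \<in> fV G \<and> lab G k = Cut \<and> \<pi> e)"
definition c2_red :: "flow \<Rightarrow> (nat \<Rightarrow> bool) \<Rightarrow> bool" where
  "c2_red G \<pi> \<longleftrightarrow> (\<exists>i e k. i \<in> fV G \<and> lab G i = Interaction \<and> e \<in> fE G \<and> up G e = Nd i \<and>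
      lo G e = Nd k \<and> k \<in> fV G \<and> lab G k = Cocontraction \<and> \<pi> e)"
definition c3_red :: "flow \<Rightarrow> (nat \<Rightarrow> bool) \<Rightarrow> bool" where
  "c3_red G \<pi> \<longleftrightarrow> (\<exists>g e k. g \<in> fV G \<and> lab G g = Contraction \<and> e \<in> fE G \<and> up G e = Nd g \<and>
      lo G e = Nd k \<and> k \<in> fV G \<and> lab G k = Cocontraction \<and> \<pi> e)"

lemma chain_short:
  assumes wfl: "wfl G" and pol: "polar G \<pi>"
    and n1: "\<not> c1_red G \<pi>" and n2: "\<not> c2_red G \<pi>" and n3: "\<not> c3_red G \<pi>"
    and fE: "\<forall>t\<le>L. f t \<in> fE G \<and> \<pi> (f t)"
    and ch: "\<forall>t<L. lo G (f t) = up G (f (Suc t))"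
    and st: "up G (f 0) = Nd i" "i \<in> fV G" "lab G i = Interaction"
    and en: "lo G (f L) = Nd k" "k \<in> fV G" "lab G k = Cut"
  shows "L = 0"
proof (rule ccontr)
  assume "L \<noteq> 0"
  have vx: "\<exists>u. u \<in> fV G \<and> lo G (f t) = Nd u \<and> up G (f (Suc t)) = Nd u
      \<and> lab G u \<in> {Contraction, Cocontraction}" if "t < L" for t
  proof -
    have a: "f t \<in> fE G" "f (Suc t) \<in> fE G" using fE that by auto
    have "lo G (f t) \<noteq> Top" "up G (f (Suc t)) \<noteq> Bot" using a wfl wf_lo_nTop wf_up_nBot by auto
    moreover have "lo G (f t) = up G (f (Suc t))" using ch that by auto
    ultimately obtain u where u: "lo G (f t) = Nd u" "up G (f (Suc t)) = Nd u"
      by (cases "lo G (f t)") (auto, metis)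
    have uV: "u \<in> fV G" using wf_loV[OF wfl a(1) u(1)] .
    have "lab G u \<in> {Contraction, Cocontraction}"
      by (rule pass_CK[OF wfl uV upper_edgesI[OF a(1) u(1)] lower_edgesI[OF a(2) u(2)]])
    then show ?thesis using u uV by blast
  qed
  have allC: "\<forall>u. lo G (f t) = Nd u \<longrightarrow> lab G u = Contraction" if "t < L" for t
    using that
  proof (induction t)
    case 0
    obtain u where u: "u \<in> fV G" "lo G (f 0) = Nd u" "lab G u \<in> {Contraction, Cocontraction}"
      using vx[OF 0] by blast
    have "lab G u \<noteq> Cocontraction"
      using n2 st fE u unfolding c2_red_def by (metis le0)
    then show ?case using u by auto
  next
    case (Suc t)
    obtain u where u: "u \<in> fV G" "lo G (f t) = Nd u" "up G (f (Suc t)) = Nd u" "lab G u \<in> {Contraction, Cocontraction}"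
      using vx[of t] Suc by auto
    have uC: "lab G u = Contraction" using Suc u by auto
    obtain w where w: "w \<in> fV G" "lo G (f (Suc t)) = Nd w" "lab G w \<in> {Contraction, Cocontraction}"
      using vx[OF Suc.prems] by blast
    have "f (Suc t) \<in> fE G" "\<pi> (f (Suc t))" using fE Suc.prems by auto
    then have "lab G w \<noteq> Cocontraction"
      using n3 u uC w unfolding c3_red_def by blast
    then show ?case using w by auto
  qed
  obtain t where t: "L = Suc t" using \<open>L \<noteq> 0\<close> not0_implies_Suc by blast
  obtain u where u: "u \<in> fV G" "lo G (f t) = Nd u" "up G (f (Suc t)) = Nd u"
    using vx[of t] t by auto
  have "lab G u = Contraction" using allC[of t] t u by auto
  moreover have "f L \<in> fE G" "\<pi> (f L)" using fE by auto
  ultimately show False using n1 u en t unfolding c1_red_def by blast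
qed




definition stp :: "flow \<Rightarrow> bool \<Rightarrow> nat \<Rightarrow> node" where
  "stp G d x = (if d then up G x else lo G x)"
definition enp :: "flow \<Rightarrow> bool \<Rightarrow> nat \<Rightarrow> node" where
  "enp G d x = (if d then lo G x else up G x)"

definition walk :: "flow \<Rightarrow> nat \<Rightarrow> nat list \<Rightarrow> bool list \<Rightarrow> nat \<Rightarrow> bool" where
  "walk G a xs ds b \<longleftrightarrow> xs \<noteq> [] \<and> length ds = length xs \<and> set xs \<subseteq> fE G \<and>
     stp G (ds!0) (xs!0) = Nd a \<and>
     enp G (ds!(length xs - 1)) (xs!(length xs - 1)) = Nd b \<and>
     (\<forall>j. Suc j < length xs \<longrightarrow> enp G (ds!j) (xs!j) = stp G (ds!Suc j) (xs!Suc j) \<and>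
        (ds!j \<noteq> ds!Suc j \<longrightarrow> (\<exists>u\<in>fV G. enp G (ds!j) (xs!j) = Nd u \<and> lab G u \<in> {Interaction, Cut})))"

lemma dpath_walk: "dpath G a xs b \<Longrightarrow> walk G a xs (replicate (length xs) True) b"
  unfolding dpath_def walk_def stp_def enp_def
  by (auto simp: hd_conv_nth last_conv_nth)

lemma rdpath_walk: assumes "dpath G b (rev xs) a" shows "walk G a xs (replicate (length xs) False) b"
proof -
  let ?n = "length xs"
  have ne: "xs \<noteq> []" and s: "set xs \<subseteq> fE G" and h: "up G (hd (rev xs)) = Nd b"
    and l: "lo G (last (rev xs)) = Nd a"
    and c: "\<forall>i. Suc i < ?n \<longrightarrow> lo G (rev xs ! i) = up G (rev xs ! Suc i)"
    using assms unfolding dpath_def by auto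
  have "lo G (xs!0) = Nd a" using l ne by (simp add: last_rev hd_conv_nth)
  moreover have "up G (xs!(?n - 1)) = Nd b" using h ne by (simp add: hd_rev last_conv_nth)
  moreover have "up G (xs!j) = lo G (xs!Suc j)" if "Suc j < ?n" for j
  proof -
    have "lo G (rev xs ! (?n - Suc (Suc j))) = up G (rev xs ! Suc (?n - Suc (Suc j)))"
      using c that by auto
    moreover have "rev xs ! (?n - Suc (Suc j)) = xs ! Suc j" using that by (simp add: rev_nth)
    moreover have "rev xs ! Suc (?n - Suc (Suc j)) = xs ! j" using that
      by (simp add: rev_nth Suc_diff_Suc)
    ultimately show ?thesis by simp
  qed
  ultimately show ?thesis using ne s unfolding walk_def stp_def enp_def by auto
qed

lemma walk_join:
  assumes w1: "walk G a xs ds u" and w2: "walk G u ys es b" and uV: "u \<in> fV G"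
    and ul: "lab G u \<in> {Interaction, Cut}"
  shows "walk G a (xs @ ys) (ds @ es) b"
proof -
  let ?n = "length xs" let ?m = "length ys"
  have n: "?n > 0" "?m > 0" using w1 w2 unfolding walk_def by auto
  have ld: "length ds = ?n" "length es = ?m" using w1 w2 unfolding walk_def by auto
  have A: "enp G ((ds@es)!j) ((xs@ys)!j) = stp G ((ds@es)!Suc j) ((xs@ys)!Suc j) \<and>
        ((ds@es)!j \<noteq> (ds@es)!Suc j \<longrightarrow> (\<exists>u\<in>fV G. enp G ((ds@es)!j) ((xs@ys)!j) = Nd u \<and> lab G u \<in> {Interaction, Cut}))"
    if j: "Suc j < ?n + ?m" for j
  proof (cases "Suc j < ?n")
    case True
    then show ?thesis using w1 ld by (simp add: nth_append walk_def)
  next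
    case False
    show ?thesis
    proof (cases "Suc j = ?n")
      case True
      then have "j = ?n - 1" by auto
      then show ?thesis using w1 w2 ld True uV ul n by (auto simp: nth_append walk_def)
    next
      case False
      then have "j \<ge> ?n" using \<open>\<not> Suc j < ?n\<close> by auto
      then obtain k where k: "j = ?n + k" using le_Suc_ex by blast
      have "Suc k < ?m" using j k by auto
      then show ?thesis using w2 ld k by (simp add: nth_append walk_def)
    qed
  qed
  have "stp G ((ds@es)!0) ((xs@ys)!0) = Nd a" using w1 n ld by (simp add: nth_append walk_def)
  moreover have "enp G ((ds@es)!(?n + ?m - 1)) ((xs@ys)!(?n + ?m - 1)) = Nd b"
  proof -
    have "\<not> (?n + ?m - 1 < ?n)" using n(2) by linarith
    moreover have "?n + ?m - 1 - ?n = ?m - 1" by simp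
    ultimately have "(ds@es)!(?n + ?m - 1) = es!(?m - 1)" "(xs@ys)!(?n + ?m - 1) = ys!(?m - 1)"
      using ld by (simp_all add: nth_append)
    then show ?thesis using w2 unfolding walk_def by simp
  qed
  ultimately show ?thesis using A w1 w2 ld unfolding walk_def by auto
qed

lemma aipath_walk: "aipath G a xs b \<Longrightarrow> \<exists>ds. walk G a xs ds b"
proof (induction rule: aipath.induct)
  case (base v xs w)
  then show ?case unfolding path_def using dpath_walk rdpath_walk by blast
next
  case (join v xs u ys w)
  then show ?case using walk_join by blast
qed




lemma changes_parity:
  "even (card {j. j < n \<and> f j \<noteq> f (Suc j)}) \<longleftrightarrow> (f n = (f 0 :: bool))"
proof (induction n)
  case 0
  then show ?case by simp
next
  case (Suc n)
  define S where "S m = {j. j < m \<and> f j \<noteq> f (Suc j)}" for m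
  have fin: "finite (S n)" unfolding S_def by auto
  have nS: "n \<notin> S n" unfolding S_def by auto
  have c: "card (S (Suc n)) = (if f n \<noteq> f (Suc n) then Suc (card (S n)) else card (S n))"
  proof (cases "f n \<noteq> f (Suc n)")
    case True
    then have "S (Suc n) = insert n (S n)" unfolding S_def by (auto simp: less_Suc_eq)
    then show ?thesis using True fin nS by simp
  next
    case False
    then have "S (Suc n) = S n" unfolding S_def by (auto simp: less_Suc_eq)
    then show ?thesis using False by simp
  qed
  have ih: "even (card (S n)) \<longleftrightarrow> (f n = f 0)" using Suc unfolding S_def .
  show ?case
    using ih c unfolding S_def[symmetric] by (cases "f n"; cases "f (Suc n)"; cases "f 0") auto
qed

lemma changes_even: "f n = (f 0 :: bool) \<Longrightarrow> even (card {j. j < n \<and> f j \<noteq> f (Suc j)})"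
  using changes_parity by blast

lemma trancl_chain_fwd:
  assumes "\<forall>j. (w j, w (Suc j)) \<in> r"
  shows "(w 0, w (Suc m)) \<in> r\<^sup>+"
proof (induction m)
  case 0 then show ?case using assms by auto
next
  case (Suc m) then show ?case using assms by (meson trancl.trancl_into_trancl)
qed

lemma trancl_chain_bwd:
  assumes "\<forall>j. (w (Suc j), w j) \<in> r"
  shows "(w (Suc m), w 0) \<in> r\<^sup>+"
proof (induction m)
  case 0 then show ?case using assms by auto
next
  case (Suc m) then show ?case using assms by (meson trancl_into_trancl2)
qed

lemma cycle_fragile:
  assumes wfl: "wfl G" and pol: "polar G \<pi>" and acy: "acyclic (grel G)"
    and n1: "\<not> c1_red G \<pi>" and n2: "\<not> c2_red G \<pi>" and n3: "\<not> c3_red G \<pi>"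
    and vV: "v \<in> fV G" and wk: "walk G v xs ds v" and dist: "distinct xs"
  shows "\<exists>e\<in>set xs. simple_edge G e"
proof -
  define n where "n = length xs"
  have npos: "n > 0" using wk unfolding walk_def n_def by auto
  have lds: "length ds = n" using wk unfolding walk_def n_def by auto
  define E where "E j = xs ! (j mod n)" for j
  define D where "D j = ds ! (j mod n)" for j
  define EN where "EN j = enp G (D j) (E j)" for j
  define ST where "ST j = stp G (D j) (E j)" for j
  have Emod: "E (j mod n) = E j" "D (j mod n) = D j" for j unfolding E_def D_def by auto
  have EnD: "E n = E 0" "D n = D 0" unfolding E_def D_def by auto
  have EE: "E j \<in> fE G" for j
    using wk npos unfolding E_def walk_def n_def by (meson nth_mem subsetD mod_less_divisor)
  have wst: "stp G (ds!0) (xs!0) = Nd v" and wen: "enp G (ds!(n - 1)) (xs!(n - 1)) = Nd v"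
    and wstep: "\<And>j. Suc j < n \<Longrightarrow> enp G (ds!j) (xs!j) = stp G (ds!Suc j) (xs!Suc j) \<and>
        (ds!j \<noteq> ds!Suc j \<longrightarrow> (\<exists>u\<in>fV G. enp G (ds!j) (xs!j) = Nd u \<and> lab G u \<in> {Interaction, Cut}))"
    using wk unfolding walk_def n_def by auto
  have sucmod: "Suc j mod n = (if Suc (j mod n) = n then 0 else Suc (j mod n))" for j
    using mod_Suc by blast
  have F1: "EN j = ST (Suc j)" for j
  proof (cases "Suc (j mod n) = n")
    case True
    then have "j mod n = n - 1" by auto
    then show ?thesis using True wst wen sucmod[of j] unfolding EN_def ST_def E_def D_def by simp
  next
    case False
    then have "Suc (j mod n) < n" using npos by (meson le_neq_implies_less mod_less_divisor Suc_leI)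
    then show ?thesis using wstep[of "j mod n"] False sucmod[of j] unfolding EN_def ST_def E_def D_def by simp
  qed
  have F2: "D j \<noteq> D (Suc j) \<Longrightarrow> Suc (j mod n) \<noteq> n \<Longrightarrow> \<exists>u\<in>fV G. EN j = Nd u \<and> lab G u \<in> {Interaction, Cut}" for j
  proof -
    assume a: "D j \<noteq> D (Suc j)" "Suc (j mod n) \<noteq> n"
    then have lt: "Suc (j mod n) < n" using npos by (meson le_neq_implies_less mod_less_divisor Suc_leI)
    have sj: "Suc j mod n = Suc (j mod n)" using sucmod[of j] a(2) by simp
    have "ds!(j mod n) \<noteq> ds!Suc (j mod n)" using a(1) sj unfolding D_def by simp
    then obtain u where "u \<in> fV G" "enp G (ds!(j mod n)) (xs!(j mod n)) = Nd u" "lab G u \<in> {Interaction, Cut}"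
      using wstep[OF lt] by blast
    then show ?thesis unfolding EN_def E_def D_def by blast
  qed
  have F3: "\<exists>u\<in>fV G. EN j = Nd u" for j
  proof (cases "Suc (j mod n) = n")
    case True
    then have "j mod n = n - 1" by auto
    then show ?thesis using vV wen unfolding EN_def E_def D_def by auto
  next
    case False
    show ?thesis
    proof (cases "D j = D (Suc j)")
      case False
      then show ?thesis using F2 \<open>Suc (j mod n) \<noteq> n\<close> by blast
    next
      case True
      have e: "EN j = ST (Suc j)" by (rule F1)
      show ?thesis
      proof (cases "D j")
        case True
        then have "lo G (E j) = up G (E (Suc j))" using e \<open>D j = D (Suc j)\<close>
          unfolding EN_def ST_def enp_def stp_def by simp
        moreover have "lo G (E j) \<in> insert Bot (Nd ` fV G)" "up G (E (Suc j)) \<in> insert Top (Nd ` fV G)"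
          using wfl EE unfolding wfl_def by auto
        ultimately show ?thesis using True unfolding EN_def enp_def by auto
      next
        case False
        then have "up G (E j) = lo G (E (Suc j))" using e \<open>D j = D (Suc j)\<close>
          unfolding EN_def ST_def enp_def stp_def by simp
        moreover have "lo G (E (Suc j)) \<in> insert Bot (Nd ` fV G)" "up G (E j) \<in> insert Top (Nd ` fV G)"
          using wfl EE unfolding wfl_def by auto
        ultimately show ?thesis using False unfolding EN_def enp_def by auto
      qed
    qed
  qed
  obtain w where w: "\<And>j. w j \<in> fV G \<and> EN j = Nd (w j)" using F3 by metis
  have wV: "w j \<in> fV G" and wEN: "EN j = Nd (w j)" and wST: "ST (Suc j) = Nd (w j)" for j
    using w F1 by auto
  have incTT: "E j \<in> upper_edges G (w j) \<and> E (Suc j) \<in> lower_edges G (w j)" if "D j" "D (Suc j)" for j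
    using wEN[of j] wST[of j] that EE unfolding EN_def ST_def enp_def stp_def upper_edges_def lower_edges_def by simp
  have incFF: "E j \<in> lower_edges G (w j) \<and> E (Suc j) \<in> upper_edges G (w j)" if "\<not> D j" "\<not> D (Suc j)" for j
    using wEN[of j] wST[of j] that EE unfolding EN_def ST_def enp_def stp_def upper_edges_def lower_edges_def by simp
  have incTF: "E j \<in> upper_edges G (w j) \<and> E (Suc j) \<in> upper_edges G (w j)" if "D j" "\<not> D (Suc j)" for j
    using wEN[of j] wST[of j] that EE unfolding EN_def ST_def enp_def stp_def upper_edges_def lower_edges_def by simp
  have incFT: "E j \<in> lower_edges G (w j) \<and> E (Suc j) \<in> lower_edges G (w j)" if "\<not> D j" "D (Suc j)" for j
    using wEN[of j] wST[of j] that EE unfolding EN_def ST_def enp_def stp_def upper_edges_def lower_edges_def by simp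
  have S1: "D j = D (Suc j) \<Longrightarrow> \<pi> (E j) = \<pi> (E (Suc j))" for j
  proof -
    assume a: "D j = D (Suc j)"
    show ?thesis
    proof (cases "D j")
      case True
      then have i: "E j \<in> upper_edges G (w j)" "E (Suc j) \<in> lower_edges G (w j)" using incTT a by auto
      have "lab G (w j) \<in> {Contraction, Cocontraction}" using pass_CK[OF wfl wV i] .
      then show ?thesis using polar_same[OF pol wV] i by blast
    next
      case False
      then have i: "E (Suc j) \<in> upper_edges G (w j)" "E j \<in> lower_edges G (w j)" using incFF a by auto
      have "lab G (w j) \<in> {Contraction, Cocontraction}" using pass_CK[OF wfl wV i] .
      then show ?thesis using polar_same[OF pol wV] i by blast
    qed
  qed
  (* acyclicity gives a turn *)
  have TE: "\<exists>j<n. D j \<noteq> D (Suc j)"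
  proof (rule ccontr)
    assume "\<not> (\<exists>j<n. D j \<noteq> D (Suc j))"
    then have nt: "D j = D (Suc j)" for j
    proof -
      have "D (j mod n) = D (Suc (j mod n))" using \<open>\<not> (\<exists>j<n. D j \<noteq> D (Suc j))\<close> npos by auto
      then show ?thesis using Emod(2)[of j] Emod(2)[of "Suc j"] Emod(2)[of "Suc (j mod n)"] mod_Suc_eq[of j n]
        by metis
    qed
    have allD: "D j = D 0" for j by (induction j) (use nt in auto)
    show False
    proof (cases "D 0")
      case True
      have "(w j, w (Suc j)) \<in> grel G" for j
      proof -
        have "up G (E (Suc j)) = Nd (w j)" "lo G (E (Suc j)) = Nd (w (Suc j))"
          using wST[of j] wEN[of "Suc j"] allD[of "Suc j"] True unfolding ST_def EN_def stp_def enp_def by auto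
        then show ?thesis using EE unfolding grel_def by blast
      qed
      then have "(w 0, w (Suc (n - 1))) \<in> (grel G)\<^sup>+" using trancl_chain_fwd by blast
      moreover have "w n = w 0" using wEN[of n] wEN[of 0] EnD unfolding EN_def by auto
      ultimately show False using acy npos unfolding acyclic_def by auto
    next
      case False
      have "(w (Suc j), w j) \<in> grel G" for j
      proof -
        have "lo G (E (Suc j)) = Nd (w j)" "up G (E (Suc j)) = Nd (w (Suc j))"
          using wST[of j] wEN[of "Suc j"] allD[of "Suc j"] False unfolding ST_def EN_def stp_def enp_def by auto
        then show ?thesis using EE unfolding grel_def by blast
      qed
      then have "(w (Suc (n - 1)), w 0) \<in> (grel G)\<^sup>+" using trancl_chain_bwd by blast
      moreover have "w n = w 0" using wEN[of n] wEN[of 0] EnD unfolding EN_def by auto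
      ultimately show False using acy npos unfolding acyclic_def by auto
    qed
  qed
  have n2le: "n \<ge> 2"
  proof (rule ccontr)
    assume "\<not> n \<ge> 2"
    then have "n = 1" using npos by auto
    then show False using TE unfolding D_def by auto
  qed
  have distE: "E j \<noteq> E (Suc j)" for j
  proof -
    have "j mod n \<noteq> Suc j mod n" using sucmod[of j] n2le
      by (metis One_nat_def Suc_le_eq mod_less_divisor n_not_Suc_n npos diff_Suc_1 less_irrefl_nat nat.inject numeral_2_eq_2)
    then show ?thesis using dist npos unfolding E_def n_def
      by (simp add: nth_eq_iff_index_eq)
  qed
  have S2a: "D j \<noteq> D (Suc j) \<Longrightarrow> lab G (w j) \<in> {Interaction, Cut} \<Longrightarrow> \<pi> (E j) \<noteq> \<pi> (E (Suc j))" for j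
  proof -
    assume a: "D j \<noteq> D (Suc j)" "lab G (w j) \<in> {Interaction, Cut}"
    have "E j \<in> upper_edges G (w j) \<union> lower_edges G (w j) \<and> E (Suc j) \<in> upper_edges G (w j) \<union> lower_edges G (w j)"
      using incTF[of j] incFT[of j] a by (cases "D j") auto
    then show ?thesis using polar_diff[OF pol wV a(2)] distE by blast
  qed
  have S2lab: "D j \<noteq> D (Suc j) \<Longrightarrow> \<pi> (E j) \<noteq> \<pi> (E (Suc j)) \<Longrightarrow>
      (D j \<longrightarrow> lab G (w j) = Cut) \<and> (\<not> D j \<longrightarrow> lab G (w j) = Interaction)" for j
  proof -
    assume a: "D j \<noteq> D (Suc j)" "\<pi> (E j) \<noteq> \<pi> (E (Suc j))"
    show ?thesis
    proof (cases "D j")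
      case True
      then have i: "E j \<in> upper_edges G (w j)" "E (Suc j) \<in> upper_edges G (w j)" using incTF a by auto
      have "lab G (w j) \<in> {Cut, Contraction}" using two_upper[OF wfl wV i distE] .
      moreover have "lab G (w j) \<noteq> Contraction" using polar_same[OF pol wV[of j], of "E j" "E (Suc j)"] i a by auto
      ultimately show ?thesis using True by auto
    next
      case False
      then have i: "E j \<in> lower_edges G (w j)" "E (Suc j) \<in> lower_edges G (w j)" using incFT a by auto
      have "lab G (w j) \<in> {Interaction, Cocontraction}" using two_lower[OF wfl wV i distE] .
      moreover have "lab G (w j) \<noteq> Cocontraction" using polar_same[OF pol wV[of j], of "E j" "E (Suc j)"] i a by auto
      ultimately show ?thesis using False by auto
    qed
  qed
  (* parity: every turn flips *)
  define T where "T = {j. j < n \<and> D j \<noteq> D (Suc j)}"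
  define F where "F = {j. j < n \<and> \<pi> (E j) \<noteq> \<pi> (E (Suc j))}"
  have eT: "even (card T)" unfolding T_def by (rule changes_even) (use EnD in auto)
  have eF: "even (card F)" unfolding F_def
    by (rule changes_even[where f = "\<lambda>j. \<pi> (E j)"]) (use EnD in auto)
  have FT: "F \<subseteq> T" unfolding F_def T_def using S1 by auto
  have TF: "T \<subseteq> insert (n - 1) F"
  proof
    fix j assume "j \<in> T"
    then have j: "j < n" "D j \<noteq> D (Suc j)" unfolding T_def by auto
    show "j \<in> insert (n - 1) F"
    proof (cases "j = n - 1")
      case False
      then have "Suc (j mod n) \<noteq> n" using j by auto
      then obtain u where u: "u \<in> fV G" "EN j = Nd u" "lab G u \<in> {Interaction, Cut}" using F2 j by blast
      then have "u = w j" using wEN by auto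
      then show ?thesis using S2a j u unfolding F_def by auto
    qed auto
  qed
  have TeqF: "T = F"
  proof (rule ccontr)
    assume "T \<noteq> F"
    then have "n - 1 \<in> T" "n - 1 \<notin> F" "T = insert (n - 1) F" using FT TF by auto
    then have "card T = Suc (card F)" unfolding F_def by simp
    then show False using eT eF by auto
  qed
  have turnflip: "D j \<noteq> D (Suc j) \<Longrightarrow> \<pi> (E j) \<noteq> \<pi> (E (Suc j))" for j
  proof -
    assume "D j \<noteq> D (Suc j)"
    then have "D (j mod n) \<noteq> D (Suc (j mod n))"
      using Emod(2)[of j] Emod(2)[of "Suc j"] Emod(2)[of "Suc (j mod n)"] mod_Suc_eq[of j n] by metis
    then have "j mod n \<in> F" using TeqF npos unfolding T_def by auto
    then have "\<pi> (E (j mod n)) \<noteq> \<pi> (E (Suc (j mod n)))" unfolding F_def by auto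
    then show ?thesis
      using Emod(1)[of j] Emod(1)[of "Suc j"] Emod(1)[of "Suc (j mod n)"] mod_Suc_eq[of j n] by metis
  qed
  obtain j0 where j0: "D j0 \<noteq> D (Suc j0)" using TE by blast
  have fl0: "\<pi> (E j0) \<noteq> \<pi> (E (Suc j0))" using turnflip j0 .
  obtain p q where pq: "\<pi> (E p)" "\<not> \<pi> (E q)" using fl0 by metis
  have Eper: "E (k + n * m) = E k" for k m unfolding E_def by simp
  have ex1: "\<exists>t. \<pi> (E (q + t))"
  proof -
    have "E (q + (p + (n - 1) * q)) = E p"
    proof -
      have "q + (p + (n - 1) * q) = p + n * q" using npos by (cases n) (auto simp: algebra_simps)
      then show ?thesis using Eper[of p q] by metis
    qed
    then show ?thesis using pq by metis
  qed
  define t0 where "t0 = (LEAST t. \<pi> (E (q + t)))"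
  have t0: "\<pi> (E (q + t0))" unfolding t0_def using ex1 by (meson LeastI_ex)
  have t0n: "t0 \<noteq> 0" using t0 pq by (metis add_0_right)
  define j1 where "j1 = q + t0 - 1"
  have j1: "\<not> \<pi> (E j1)" "\<pi> (E (Suc j1))"
  proof -
    have "\<not> \<pi> (E (q + (t0 - 1)))" unfolding t0_def
      by (metis t0_def t0n diff_less not_less_Least zero_less_iff_neq_zero zero_less_one)
    then show "\<not> \<pi> (E j1)" unfolding j1_def using t0n by simp
    show "\<pi> (E (Suc j1))" unfolding j1_def using t0 t0n by simp
  qed
  define a where "a = Suc j1"
  have ex2: "\<exists>t. \<not> \<pi> (E (Suc (a + t)))"
  proof -
    have "Suc (a + (n - 2)) = j1 + n * 1" unfolding a_def using n2le by auto
    then have "E (Suc (a + (n - 2))) = E j1" using Eper by metis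
    then show ?thesis using j1 by metis
  qed
  define L where "L = (LEAST t. \<not> \<pi> (E (Suc (a + t))))"
  have Lend: "\<not> \<pi> (E (Suc (a + L)))" unfolding L_def using LeastI_ex[OF ex2] .
  have runpos: "t \<le> L \<Longrightarrow> \<pi> (E (a + t))" for t
  proof (induction t)
    case 0 then show ?case using j1 a_def by simp
  next
    case (Suc t)
    then have "t < L" by auto
    then have "\<pi> (E (Suc (a + t)))" unfolding L_def using not_less_Least by blast
    then show ?case by simp
  qed
  have runD: "t \<le> L \<Longrightarrow> D (a + t) = D a" for t
  proof (induction t)
    case 0 then show ?case by simp
  next
    case (Suc t)
    then have "t \<le> L" "Suc t \<le> L" by auto
    then have "\<pi> (E (a + t))" "\<pi> (E (Suc (a + t)))" using runpos[of t] runpos[of "Suc t"] by auto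
    then have "D (a + t) = D (Suc (a + t))" using turnflip by blast
    then show ?case using Suc by simp
  qed
  have flipA: "D j1 \<noteq> D a" using S1[of j1] j1 unfolding a_def by auto
  have flipB: "D (a + L) \<noteq> D (Suc (a + L))" using S1[of "a + L"] runpos[of L] Lend by auto
  have labA: "(D j1 \<longrightarrow> lab G (w j1) = Cut) \<and> (\<not> D j1 \<longrightarrow> lab G (w j1) = Interaction)"
    using S2lab[of j1] flipA j1 unfolding a_def by auto
  have labB: "(D (a + L) \<longrightarrow> lab G (w (a + L)) = Cut) \<and> (\<not> D (a + L) \<longrightarrow> lab G (w (a + L)) = Interaction)"
    using S2lab[of "a + L"] flipB runpos[of L] Lend by auto
  have Ea: "E a \<in> set xs" unfolding E_def n_def using npos n_def by simp
  show ?thesis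
  proof (cases "D a")
    case True
    have Dj1: "\<not> D j1" using flipA True by simp
    have upa: "up G (E a) = Nd (w j1)" using wST[of j1] True unfolding a_def ST_def stp_def by simp
    have DL: "D (a + L) = True" using runD[of L] True by simp
    have loL: "lo G (E (a + L)) = Nd (w (a + L))" using wEN[of "a + L"] DL unfolding EN_def enp_def by simp
    have ch: "\<forall>t<L. lo G (E (a + t)) = up G (E (a + Suc t))"
    proof (intro allI impI)
      fix t assume "t < L"
      then have "D (a + t) = True" "D (Suc (a + t)) = True" using runD[of t] runD[of "Suc t"] True by auto
      then show "lo G (E (a + t)) = up G (E (a + Suc t))"
        using F1[of "a + t"] unfolding EN_def ST_def enp_def stp_def by simp
    qed
    have "L = 0"
      by (rule chain_short[OF wfl pol n1 n2 n3, where f = "\<lambda>t. E (a + t)"])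
         (use EE runpos ch upa wV Dj1 labA loL DL labB in auto)
    then have "simple_edge G (E a)" unfolding simple_edge_def
      using EE upa loL wV Dj1 labA DL labB by auto
    then show ?thesis using Ea by blast
  next
    case False
    have Dj1: "D j1" using flipA False by simp
    have loa: "lo G (E a) = Nd (w j1)" using wST[of j1] False unfolding a_def ST_def stp_def by simp
    have DL: "D (a + L) = False" using runD[of L] False by simp
    have upL: "up G (E (a + L)) = Nd (w (a + L))" using wEN[of "a + L"] DL unfolding EN_def enp_def by simp
    have ch: "\<forall>t<L. lo G (E (a + (L - t))) = up G (E (a + (L - Suc t)))"
    proof (intro allI impI)
      fix t assume t: "t < L"
      then have ix: "a + (L - t) = Suc (a + (L - Suc t))" by auto
      have "D (a + (L - Suc t)) = False" "D (Suc (a + (L - Suc t))) = False"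
        using runD[of "L - Suc t"] runD[of "L - t"] False t ix by auto
      then show "lo G (E (a + (L - t))) = up G (E (a + (L - Suc t)))"
        using F1[of "a + (L - Suc t)"] ix unfolding EN_def ST_def enp_def stp_def by simp
    qed
    have rp2: "\<pi> (E (a + (L - t)))" if "t \<le> L" for t using runpos[of "L - t"] by simp
    have "L = 0"
      by (rule chain_short[OF wfl pol n1 n2 n3, where f = "\<lambda>t. E (a + (L - t))"])
         (use EE rp2 ch upL wV Dj1 labA loa DL labB in auto)
    then have "simple_edge G (E a)" unfolding simple_edge_def
      using EE upL loa wV Dj1 labA DL labB by auto
    then show ?thesis using Ea by blast
  qed
qed




definition ranked :: "flow \<Rightarrow> (nat \<Rightarrow> int) \<Rightarrow> bool" where
  "ranked G \<rho> \<longleftrightarrow> (\<forall>e\<in>fE G. \<forall>a b. up G e = Nd a \<longrightarrow> lo G e = Nd b \<longrightarrow> \<rho> a < \<rho> b)"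

definition posv :: "flow \<Rightarrow> (nat \<Rightarrow> bool) \<Rightarrow> nat \<Rightarrow> bool" where
  "posv G \<pi> v \<longleftrightarrow> (\<exists>e\<in>lower_edges G v. \<pi> e)"

definition bound :: "int \<Rightarrow> flow \<Rightarrow> (nat \<Rightarrow> bool) \<Rightarrow> (nat \<Rightarrow> int) \<Rightarrow> bool" where
  "bound R G \<pi> \<rho> \<longleftrightarrow> (\<forall>v\<in>fV G. lab G v \<in> {Contraction, Cocontraction} \<longrightarrow> posv G \<pi> v \<longrightarrow> 0 \<le> \<rho> v \<and> \<rho> v \<le> R)"

definition Cset :: "flow \<Rightarrow> (nat \<Rightarrow> bool) \<Rightarrow> nat set" where
  "Cset G \<pi> = {v\<in>fV G. lab G v = Contraction \<and> posv G \<pi> v}"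
definition Kset :: "flow \<Rightarrow> (nat \<Rightarrow> bool) \<Rightarrow> nat set" where
  "Kset G \<pi> = {v\<in>fV G. lab G v = Cocontraction \<and> posv G \<pi> v}"

definition W :: "int \<Rightarrow> flow \<Rightarrow> (nat \<Rightarrow> bool) \<Rightarrow> (nat \<Rightarrow> int) \<Rightarrow> nat" where
  "W R G \<pi> \<rho> = (\<Sum>v\<in>Cset G \<pi>. (3::nat) ^ nat (R - \<rho> v)) + (\<Sum>v\<in>Kset G \<pi>. (3::nat) ^ nat (\<rho> v))"

definition polar_at :: "flow \<Rightarrow> (nat \<Rightarrow> bool) \<Rightarrow> nat \<Rightarrow> bool" where
  "polar_at G \<pi> v \<longleftrightarrow>
          (lab G v \<in> {Contraction, Cocontraction} \<longrightarrow>
             (\<forall>e\<in>upper_edges G v \<union> lower_edges G v. \<forall>e'\<in>upper_edges G v \<union> lower_edges G v.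
                \<pi> e = \<pi> e')) \<and>
          (lab G v \<in> {Interaction, Cut} \<longrightarrow>
             (\<forall>e\<in>upper_edges G v \<union> lower_edges G v. \<forall>e'\<in>upper_edges G v \<union> lower_edges G v.
                e \<noteq> e' \<longrightarrow> \<pi> e \<noteq> \<pi> e'))"

lemma polar_iff: "polar G \<pi> \<longleftrightarrow> (\<forall>v\<in>fV G. polar_at G \<pi> v)"
  by (simp only: polar_def polar_at_def)

lemma polar_at_transfer:
  "lab B v = lab A v \<Longrightarrow> upper_edges B v = upper_edges A v \<Longrightarrow> lower_edges B v = lower_edges A v \<Longrightarrow>
   (\<forall>x\<in>upper_edges A v \<union> lower_edges A v. \<pi>' x = \<pi> x) \<Longrightarrow> polar_at A \<pi> v \<Longrightarrow> polar_at B \<pi>' v"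
proof -
  assume a: "lab B v = lab A v" "upper_edges B v = upper_edges A v" "lower_edges B v = lower_edges A v"
    "\<forall>x\<in>upper_edges A v \<union> lower_edges A v. \<pi>' x = \<pi> x" "polar_at A \<pi> v"
  show ?thesis using a(4,5) unfolding polar_at_def a(1,2,3) by metis
qed

lemma polar_at_CK:
  "lab G v \<in> {Contraction, Cocontraction} \<Longrightarrow> (\<forall>x\<in>upper_edges G v \<union> lower_edges G v. \<pi> x = b) \<Longrightarrow> polar_at G \<pi> v"
  unfolding polar_at_def by auto

lemma polar_at_IC:
  "lab G v \<in> {Interaction, Cut} \<Longrightarrow> upper_edges G v \<union> lower_edges G v = {x, y} \<Longrightarrow> \<pi> x \<noteq> \<pi> y \<Longrightarrow> polar_at G \<pi> v"
  unfolding polar_at_def by auto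

lemma ranked_acyclic:
  assumes "ranked G \<rho>" shows "acyclic (grel G)"
proof -
  have "(a, b) \<in> (grel G)\<^sup>+ \<Longrightarrow> \<rho> a < \<rho> b" for a b
  proof (induction rule: trancl_induct)
    case (base y) then show ?case using assms unfolding grel_def ranked_def by auto
  next
    case (step y z)
    then have "\<rho> y < \<rho> z" using assms unfolding grel_def ranked_def by auto
    then show ?case using step by simp
  qed
  then show ?thesis unfolding acyclic_def by (meson less_irrefl)
qed

lemma acyclic_ranked:
  assumes wfl: "wfl G" and acy: "acyclic (grel G)"
  shows "ranked G (\<lambda>x. int (card {y. (y, x) \<in> (grel G)\<^sup>+}))"
proof -
  have sub: "grel G \<subseteq> fV G \<times> fV G"
  proof
    fix p assume "p \<in> grel G"
    then obtain a b e where "p = (a, b)" "e \<in> fE G" "up G e = Nd a" "lo G e = Nd b" unfolding grel_def by blast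
    then show "p \<in> fV G \<times> fV G" using wf_upV[OF wfl] wf_loV[OF wfl] by blast
  qed
  have fin: "finite {y. (y, x) \<in> (grel G)\<^sup>+}" for x
  proof -
    have "(grel G)\<^sup>+ \<subseteq> fV G \<times> fV G" using trancl_subset_Sigma[OF sub] .
    then have "{y. (y, x) \<in> (grel G)\<^sup>+} \<subseteq> fV G" by auto
    then show ?thesis using wfl unfolding wfl_def by (meson finite_subset)
  qed
  show ?thesis unfolding ranked_def
  proof (intro ballI allI impI)
    fix e a b assume e: "e \<in> fE G" "up G e = Nd a" "lo G e = Nd b"
    then have ab: "(a, b) \<in> grel G" unfolding grel_def by auto
    have "{y. (y, a) \<in> (grel G)\<^sup>+} \<subset> {y. (y, b) \<in> (grel G)\<^sup>+}"
    proof
      show "{y. (y, a) \<in> (grel G)\<^sup>+} \<subseteq> {y. (y, b) \<in> (grel G)\<^sup>+}"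
      proof
        fix y assume "y \<in> {y. (y, a) \<in> (grel G)\<^sup>+}"
        then have "(y, a) \<in> (grel G)\<^sup>+" by simp
        then have "(y, b) \<in> (grel G)\<^sup>+" using ab by (rule trancl_into_trancl)
        then show "y \<in> {y. (y, b) \<in> (grel G)\<^sup>+}" by simp
      qed
      have "a \<in> {y. (y, b) \<in> (grel G)\<^sup>+}" using ab by auto
      moreover have "a \<notin> {y. (y, a) \<in> (grel G)\<^sup>+}" using acy unfolding acyclic_def by auto
      ultimately show "{y. (y, a) \<in> (grel G)\<^sup>+} \<noteq> {y. (y, b) \<in> (grel G)\<^sup>+}" by blast
    qed
    then have "card {y. (y, a) \<in> (grel G)\<^sup>+} < card {y. (y, b) \<in> (grel G)\<^sup>+}"
      using fin psubset_card_mono by blast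
    then show "int (card {y. (y, a) \<in> (grel G)\<^sup>+}) < int (card {y. (y, b) \<in> (grel G)\<^sup>+})" by simp
  qed
qed

lemma fresh_nat: "finite S \<Longrightarrow> Suc (Max (insert 0 S)) + i \<notin> S"
proof
  assume "finite S" "Suc (Max (insert 0 S)) + i \<in> S"
  then have "Suc (Max (insert 0 S)) + i \<le> Max (insert 0 S)" by (simp add: Max_ge)
  then show False by linarith
qed

lemma card1_eq: "finite A \<Longrightarrow> card A = 1 \<Longrightarrow> x \<in> A \<Longrightarrow> A = {x}"
  by (metis card_1_singletonE singletonD)

lemma card2_other: "finite A \<Longrightarrow> card A = 2 \<Longrightarrow> x \<in> A \<Longrightarrow> \<exists>y. y \<noteq> x \<and> A = {x, y}"
proof -
  assume a: "finite A" "card A = 2" "x \<in> A"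
  then have "card (A - {x}) = 1" by simp
  then obtain y where "A - {x} = {y}" by (meson card_1_singletonE)
  then show ?thesis using a by blast
qed

lemma card2_get: "card A = 2 \<Longrightarrow> \<exists>x y. x \<noteq> y \<and> A = {x, y}"
  by (meson card_2_iff)

lemma card0_empty: "finite A \<Longrightarrow> card A = 0 \<Longrightarrow> A = {}"
  by simp




lemma posv_transfer: "lower_edges B v = lower_edges A v \<Longrightarrow> (\<forall>x\<in>lower_edges A v. \<pi>' x = \<pi> x) \<Longrightarrow>
  posv B \<pi>' v = posv A \<pi> v"
  unfolding posv_def by auto

lemma lo_fresh: "wfl A \<Longrightarrow> y \<in> fE A \<Longrightarrow> z \<notin> fV A \<Longrightarrow> lo A y \<noteq> Nd z"
  using wf_loV by blast
lemma up_fresh: "wfl A \<Longrightarrow> y \<in> fE A \<Longrightarrow> z \<notin> fV A \<Longrightarrow> up A y \<noteq> Nd z"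
  using wf_upV by blast

lemma c1_build:
  assumes wfl: "wfl A" and pol: "polar A \<pi>" and rk: "ranked A \<rho>" and bd: "bound R A \<pi> \<rho>"
    and red: "c1_red A \<pi>"
  shows "\<exists>B \<pi>' \<rho>'. c_step A B \<and> wfl B \<and> polar B \<pi>' \<and> ranked B \<rho>' \<and> bound R B \<pi>' \<rho>' \<and>
           W R B \<pi>' \<rho>' < W R A \<pi> \<rho>"
proof -
  obtain g e k where g: "g \<in> fV A" "lab A g = Contraction" and e: "e \<in> fE A" "up A e = Nd g" "lo A e = Nd k"
    and k: "k \<in> fV A" "lab A k = Cut" and pe: "\<pi> e"
    using red unfolding c1_red_def by blast
  have finV: "finite (fV A)" and finE: "finite (fE A)" using wfl unfolding wfl_def by auto
  have Lg: "lower_edges A g = {e}"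
    using card1_eq[OF wf_finL[OF wfl] _ lower_edgesI[OF e(1,2)]] wf_cardL[OF wfl g(1)] g(2) by simp
  obtain e1 e2 where e12: "e1 \<noteq> e2" "upper_edges A g = {e1, e2}"
    using card2_get wf_cardU[OF wfl g(1)] g(2) by (metis n_upper.simps(5))
  obtain e3 where e3: "e3 \<noteq> e" "upper_edges A k = {e, e3}"
    using card2_other[OF wf_finU[OF wfl] _ upper_edgesI[OF e(1,3)]] wf_cardU[OF wfl k(1)] k(2)
    by (metis n_upper.simps(2))
  have Lk: "lower_edges A k = {}" using wf_cardL[OF wfl k(1)] k(2) wf_finL[OF wfl] by simp
  have E1: "e1 \<in> fE A" "lo A e1 = Nd g" "e2 \<in> fE A" "lo A e2 = Nd g"
    using e12 unfolding upper_edges_def by auto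
  have E3: "e3 \<in> fE A" "lo A e3 = Nd k" using e3 unfolding upper_edges_def by auto
  have gk: "g \<noteq> k" using g k by auto
  have ne: "e1 \<noteq> e" "e2 \<noteq> e" "e3 \<noteq> e1" "e3 \<noteq> e2" using E1 E3 e gk by auto
  define k' where "k' = Suc (Max (insert 0 (fV A)))"
  define x1 where "x1 = k' + 1"
  define x2 where "x2 = k' + 2"
  have fr: "k' \<notin> fV A" "x1 \<notin> fV A" "x2 \<notin> fV A"
    using fresh_nat[OF finV, of 0] fresh_nat[OF finV, of 1] fresh_nat[OF finV, of 2]
    unfolding k'_def x1_def x2_def by auto
  have nv: "k' \<noteq> x1" "k' \<noteq> x2" "x1 \<noteq> x2" unfolding x1_def x2_def by auto
  define d1 where "d1 = Suc (Max (insert 0 (fE A)))"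
  define d2 where "d2 = d1 + 1"
  have frd: "d1 \<notin> fE A" "d2 \<notin> fE A"
    using fresh_nat[OF finE, of 0] fresh_nat[OF finE, of 1] unfolding d1_def d2_def by auto
  have nd: "d1 \<noteq> d2" "d1 \<noteq> e" "d2 \<noteq> e" "d1 \<noteq> e1" "d2 \<noteq> e1" "d1 \<noteq> e2" "d2 \<noteq> e2"
    "d1 \<noteq> e3" "d2 \<noteq> e3"
    using frd e(1) E1 E3 unfolding d2_def by auto
  define B where "B = A\<lparr> fV := (fV A - {g, k}) \<union> {k', x1, x2},
            fE := (fE A - {e}) \<union> {d1, d2},
            lab := (lab A)(k' := Cocontraction, x1 := Cut, x2 := Cut),
            up := (up A)(d1 := Nd k', d2 := Nd k'),
            lo := (lo A)(e3 := Nd k', e1 := Nd x1, d1 := Nd x1, e2 := Nd x2, d2 := Nd x2) \<rparr>"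
  have BV: "fV B = (fV A - {g, k}) \<union> {k', x1, x2}" and BE: "fE B = (fE A - {e}) \<union> {d1, d2}"
    and Blab: "lab B = (lab A)(k' := Cocontraction, x1 := Cut, x2 := Cut)"
    and Bup: "up B = (up A)(d1 := Nd k', d2 := Nd k')"
    and Blo: "lo B = (lo A)(e3 := Nd k', e1 := Nd x1, d1 := Nd x1, e2 := Nd x2, d2 := Nd x2)"
    unfolding B_def by simp_all
  have step: "c_step A B"
    unfolding c_step_def c1_step_def
    apply (rule disjI1)
    apply (rule exI[of _ g], rule exI[of _ k], rule exI[of _ e1], rule exI[of _ e2], rule exI[of _ e],
        rule exI[of _ e3], rule exI[of _ k'], rule exI[of _ x1], rule exI[of _ x2], rule exI[of _ d1],
        rule exI[of _ d2])
    using g k e E1 E3 e12 e3 fr nv frd nd unfolding B_def by simp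
  have oldL: "lower_edges B v = lower_edges A v" if v: "v \<in> fV A" "v \<noteq> g" "v \<noteq> k" for v
  proof -
    have "up A e \<noteq> Nd v" using e v by auto
    moreover have "Nd k' \<noteq> Nd v" using fr v by auto
    ultimately show ?thesis unfolding lower_edges_def BE Bup using nd frd by auto
  qed
  have oldU: "upper_edges B v = upper_edges A v" if v: "v \<in> fV A" "v \<noteq> g" "v \<noteq> k" for v
  proof -
    have "lo A e \<noteq> Nd v" "lo A e1 \<noteq> Nd v" "lo A e2 \<noteq> Nd v" "lo A e3 \<noteq> Nd v" using e E1 E3 v by auto
    moreover have "Nd k' \<noteq> Nd v" "Nd x1 \<noteq> Nd v" "Nd x2 \<noteq> Nd v" using fr v by auto
    ultimately show ?thesis unfolding upper_edges_def BE Blo using nd frd ne by auto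
  qed
  have oldlab: "lab B v = lab A v" if "v \<in> fV A" for v using that fr unfolding Blab by auto
  have Uk': "upper_edges B k' = {e3}"
  proof -
    have "\<forall>y\<in>fE A. lo A y \<noteq> Nd k'" using lo_fresh[OF wfl] fr by blast
    then show ?thesis unfolding upper_edges_def BE Blo using nd frd ne nv E3 e3 by auto
  qed
  have Lk': "lower_edges B k' = {d1, d2}"
  proof -
    have "\<forall>y\<in>fE A. up A y \<noteq> Nd k'" using up_fresh[OF wfl] fr by blast
    then show ?thesis unfolding lower_edges_def BE Bup using nd frd by auto
  qed
  have Ux1: "upper_edges B x1 = {e1, d1}"
  proof -
    have "\<forall>y\<in>fE A. lo A y \<noteq> Nd x1" using lo_fresh[OF wfl] fr by blast
    then show ?thesis unfolding upper_edges_def BE Blo using nd frd ne nv E1 e12(1) by auto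
  qed
  have Ux2: "upper_edges B x2 = {e2, d2}"
  proof -
    have "\<forall>y\<in>fE A. lo A y \<noteq> Nd x2" using lo_fresh[OF wfl] fr by blast
    then show ?thesis unfolding upper_edges_def BE Blo using nd frd ne nv E1 e12(1) by auto
  qed
  have Lx1: "lower_edges B x1 = {}"
  proof -
    have "\<forall>y\<in>fE A. up A y \<noteq> Nd x1" using up_fresh[OF wfl] fr by blast
    then show ?thesis unfolding lower_edges_def BE Bup using nd frd nv by auto
  qed
  have Lx2: "lower_edges B x2 = {}"
  proof -
    have "\<forall>y\<in>fE A. up A y \<noteq> Nd x2" using up_fresh[OF wfl] fr by blast
    then show ?thesis unfolding lower_edges_def BE Bup using nd frd nv by auto
  qed
  have labnew: "lab B k' = Cocontraction" "lab B x1 = Cut" "lab B x2 = Cut"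
    unfolding Blab using nv by auto
  have wfB: "wfl B"
  proof -
    have fin: "finite (fV B)" "finite (fE B)" unfolding BV BE using finV finE by auto
    have ends: "\<forall>y\<in>fE B. up B y \<in> insert Top (Nd ` fV B) \<and> lo B y \<in> insert Bot (Nd ` fV B)"
    proof
      fix y assume y: "y \<in> fE B"
      show "up B y \<in> insert Top (Nd ` fV B) \<and> lo B y \<in> insert Bot (Nd ` fV B)"
      proof (cases "y \<in> {d1, d2}")
        case True
        then show ?thesis unfolding Bup Blo BV using nd by auto
      next
        case False
        then have yA: "y \<in> fE A" "y \<noteq> e" "y \<noteq> d1" "y \<noteq> d2" using y unfolding BE by auto
        have upB: "up B y = up A y" unfolding Bup using yA by simp
        have "up A y \<in> insert Top (Nd ` fV A)" using wfl yA unfolding wfl_def by auto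
        moreover have "up A y \<noteq> Nd g" using Lg yA unfolding lower_edges_def by auto
        moreover have "up A y \<noteq> Nd k" using Lk yA unfolding lower_edges_def by auto
        ultimately have u: "up B y \<in> insert Top (Nd ` fV B)" unfolding upB BV by auto
        have "lo B y \<in> insert Bot (Nd ` fV B)"
        proof (cases "y \<in> {e1, e2, e3}")
          case True
          then show ?thesis unfolding Blo BV using nd ne e12 by auto
        next
          case False
          then have loB: "lo B y = lo A y" unfolding Blo using yA by simp
          have "lo A y \<in> insert Bot (Nd ` fV A)" using wfl yA unfolding wfl_def by auto
          moreover have "lo A y \<noteq> Nd g" using e12 yA False unfolding upper_edges_def by auto
          moreover have "lo A y \<noteq> Nd k" using e3 yA False unfolding upper_edges_def by auto
          ultimately show ?thesis unfolding loB BV by auto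
        qed
        then show ?thesis using u by simp
      qed
    qed
    have cards: "\<forall>v\<in>fV B. card (upper_edges B v) = n_upper (lab B v) \<and> card (lower_edges B v) = n_lower (lab B v)"
    proof
      fix v assume v: "v \<in> fV B"
      show "card (upper_edges B v) = n_upper (lab B v) \<and> card (lower_edges B v) = n_lower (lab B v)"
      proof (cases "v \<in> {k', x1, x2}")
        case True
        then show ?thesis using Uk' Lk' Ux1 Ux2 Lx1 Lx2 labnew nd ne e12 by auto
      next
        case False
        then have vA: "v \<in> fV A" "v \<noteq> g" "v \<noteq> k" using v unfolding BV by auto
        then show ?thesis using oldU[OF vA] oldL[OF vA] oldlab[OF vA(1)] wf_cardU[OF wfl vA(1)] wf_cardL[OF wfl vA(1)]
          by simp
      qed
    qed
    show ?thesis unfolding wfl_def using fin ends cards by blast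
  qed
  define \<pi>' where "\<pi>' = \<pi>(d1 := \<pi> e3, d2 := \<pi> e3)"
  have \<pi>old: "\<forall>x\<in>fE A. \<pi>' x = \<pi> x" unfolding \<pi>'_def using frd by auto
  have pe1: "\<pi> e1 = \<pi> e" "\<pi> e2 = \<pi> e"
    using polar_same[OF pol g(1)] g(2) e12 Lg by auto
  have pe3: "\<pi> e3 \<noteq> \<pi> e"
    using polar_diff[OF pol k(1)] k(2) e3 by auto
  have polB: "polar B \<pi>'"
    unfolding polar_iff
  proof
    fix v assume v: "v \<in> fV B"
    show "polar_at B \<pi>' v"
    proof (cases "v \<in> {k', x1, x2}")
      case True
      moreover have "polar_at B \<pi>' k'"
        by (rule polar_at_CK[where b = "\<pi> e3"]) (use labnew Uk' Lk' nd in \<open>auto simp: \<pi>'_def\<close>)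
      moreover have "polar_at B \<pi>' x1"
        by (rule polar_at_IC[where x = e1 and y = d1]) (use labnew Ux1 Lx1 nd pe1 pe3 in \<open>auto simp: \<pi>'_def\<close>)
      moreover have "polar_at B \<pi>' x2"
        by (rule polar_at_IC[where x = e2 and y = d2]) (use labnew Ux2 Lx2 nd pe1 pe3 in \<open>auto simp: \<pi>'_def\<close>)
      ultimately show ?thesis by auto
    next
      case False
      then have vA: "v \<in> fV A" "v \<noteq> g" "v \<noteq> k" using v unfolding BV by auto
      have sub: "upper_edges A v \<union> lower_edges A v \<subseteq> fE A" unfolding upper_edges_def lower_edges_def by auto
      show ?thesis
      proof (rule polar_at_transfer[where \<pi>=\<pi>, OF oldlab[OF vA(1)] oldU[OF vA] oldL[OF vA]])
        show "\<forall>x\<in>upper_edges A v \<union> lower_edges A v. \<pi>' x = \<pi> x" using sub \<pi>old by blast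
        show "polar_at A \<pi> v" using pol vA unfolding polar_iff by blast
      qed
    qed
  qed
  define \<rho>' where "\<rho>' = \<rho>(k' := \<rho> k, x1 := \<rho> k + 1, x2 := \<rho> k + 1)"
  have \<rho>old: "\<rho>' v = \<rho> v" if "v \<in> fV A" for v unfolding \<rho>'_def using fr that by auto
  have rkA: "\<rho> a < \<rho> b" if "y \<in> fE A" "up A y = Nd a" "lo A y = Nd b" for y a b
    using rk that unfolding ranked_def by blast
  have rkB: "ranked B \<rho>'"
    unfolding ranked_def
  proof (intro ballI allI impI)
    fix y a b assume y: "y \<in> fE B" "up B y = Nd a" "lo B y = Nd b"
    show "\<rho>' a < \<rho>' b"
    proof (cases "y \<in> {d1, d2}")
      case True
      then have "a = k'" "b = x1 \<or> b = x2" using y nd unfolding Bup Blo by auto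
      then show ?thesis unfolding \<rho>'_def using nv by auto
    next
      case False
      then have yA: "y \<in> fE A" "y \<noteq> e" "y \<noteq> d1" "y \<noteq> d2" using y unfolding BE by auto
      have ua: "up A y = Nd a" using y yA unfolding Bup by simp
      have aA: "a \<in> fV A" using wf_upV[OF wfl yA(1) ua] .
      have ra: "\<rho>' a = \<rho> a" using \<rho>old[OF aA] .
      have rgk: "\<rho> g < \<rho> k" using rkA[OF e] .
      consider "y = e3" | "y = e1" | "y = e2" | "y \<notin> {e1, e2, e3}" by auto
      then show ?thesis
      proof cases
        case 1
        then have "b = k'" using y nd ne unfolding Blo by auto
        then show ?thesis using ra rkA[OF E3(1) _ E3(2)] ua 1 nv unfolding \<rho>'_def by auto
      next
        case 2
        then have "b = x1" using y nd ne e12(1) unfolding Blo by auto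
        then show ?thesis using ra rkA[OF E1(1) _ E1(2)] ua 2 nv rgk unfolding \<rho>'_def by auto
      next
        case 3
        then have "b = x2" using y nd ne e12 unfolding Blo by auto
        then show ?thesis using ra rkA[OF E1(3) _ E1(4)] ua 3 nv rgk unfolding \<rho>'_def by auto
      next
        case 4
        then have lb: "lo A y = Nd b" using y yA unfolding Blo by simp
        have "b \<in> fV A" using wf_loV[OF wfl yA(1) lb] .
        then show ?thesis using ra \<rho>old rkA[OF yA(1) ua lb] by simp
      qed
    qed
  qed
  have posold: "posv B \<pi>' v = posv A \<pi> v" if vA: "v \<in> fV A" "v \<noteq> g" "v \<noteq> k" for v
    by (rule posv_transfer[OF oldL[OF vA]]) (use \<pi>old in \<open>auto simp: lower_edges_def\<close>)
  have posk': "\<not> posv B \<pi>' k'" unfolding posv_def Lk' \<pi>'_def using pe pe3 nd by auto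
  have bdB: "bound R B \<pi>' \<rho>'"
    unfolding bound_def
  proof (intro ballI impI)
    fix v assume v: "v \<in> fV B" "lab B v \<in> {Contraction, Cocontraction}" "posv B \<pi>' v"
    show "0 \<le> \<rho>' v \<and> \<rho>' v \<le> R"
    proof (cases "v \<in> {k', x1, x2}")
      case True
      then show ?thesis using v labnew posk' by auto
    next
      case False
      then have vA: "v \<in> fV A" "v \<noteq> g" "v \<noteq> k" using v unfolding BV by auto
      then show ?thesis using bd v oldlab[OF vA(1)] posold[OF vA] \<rho>old[OF vA(1)] unfolding bound_def by auto
    qed
  qed
  have gC: "g \<in> Cset A \<pi>" unfolding Cset_def posv_def using g Lg pe by auto
  have CB: "Cset B \<pi>' = Cset A \<pi> - {g}"
  proof
    show "Cset B \<pi>' \<subseteq> Cset A \<pi> - {g}"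
    proof
      fix v assume "v \<in> Cset B \<pi>'"
      then have v: "v \<in> fV B" "lab B v = Contraction" "posv B \<pi>' v" unfolding Cset_def by auto
      then have "v \<notin> {k', x1, x2}" using labnew by auto
      then have vA: "v \<in> fV A" "v \<noteq> g" "v \<noteq> k" using v unfolding BV by auto
      then show "v \<in> Cset A \<pi> - {g}" using v oldlab posold unfolding Cset_def by auto
    qed
    show "Cset A \<pi> - {g} \<subseteq> Cset B \<pi>'"
    proof
      fix v assume "v \<in> Cset A \<pi> - {g}"
      then have v: "v \<in> fV A" "lab A v = Contraction" "posv A \<pi> v" "v \<noteq> g" unfolding Cset_def by auto
      then have "v \<noteq> k" using k by auto
      then show "v \<in> Cset B \<pi>'" using v oldlab posold unfolding Cset_def BV by auto
    qed
  qed
  have KB: "Kset B \<pi>' = Kset A \<pi>"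
  proof
    show "Kset B \<pi>' \<subseteq> Kset A \<pi>"
    proof
      fix v assume "v \<in> Kset B \<pi>'"
      then have v: "v \<in> fV B" "lab B v = Cocontraction" "posv B \<pi>' v" unfolding Kset_def by auto
      then have "v \<notin> {k', x1, x2}" using labnew posk' by auto
      then have vA: "v \<in> fV A" "v \<noteq> g" "v \<noteq> k" using v unfolding BV by auto
      then show "v \<in> Kset A \<pi>" using v oldlab posold unfolding Kset_def by auto
    qed
    show "Kset A \<pi> \<subseteq> Kset B \<pi>'"
    proof
      fix v assume "v \<in> Kset A \<pi>"
      then have v: "v \<in> fV A" "lab A v = Cocontraction" "posv A \<pi> v" unfolding Kset_def by auto
      then have "v \<noteq> k" "v \<noteq> g" using k g by auto
      then show "v \<in> Kset B \<pi>'" using v oldlab posold unfolding Kset_def BV by auto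
    qed
  qed
  have finC: "finite (Cset A \<pi>)" "finite (Kset A \<pi>)" using finV unfolding Cset_def Kset_def by auto
  have CsubV: "Cset A \<pi> \<subseteq> fV A" "Kset A \<pi> \<subseteq> fV A" unfolding Cset_def Kset_def by auto
  have s1: "(\<Sum>v\<in>Cset B \<pi>'. (3::nat) ^ nat (R - \<rho>' v)) = (\<Sum>v\<in>Cset A \<pi> - {g}. (3::nat) ^ nat (R - \<rho> v))"
    unfolding CB by (rule sum.cong) (use CsubV \<rho>old in auto)
  have s2: "(\<Sum>v\<in>Kset B \<pi>'. (3::nat) ^ nat (\<rho>' v)) = (\<Sum>v\<in>Kset A \<pi>. (3::nat) ^ nat (\<rho> v))"
    unfolding KB by (rule sum.cong) (use CsubV \<rho>old in auto)
  have s3: "(\<Sum>v\<in>Cset A \<pi>. (3::nat) ^ nat (R - \<rho> v)) = 3 ^ nat (R - \<rho> g) + (\<Sum>v\<in>Cset A \<pi> - {g}. (3::nat) ^ nat (R - \<rho> v))"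
    using sum.remove[OF finC(1) gC] .
  have "W R B \<pi>' \<rho>' < W R A \<pi> \<rho>" unfolding W_def s1 s2 s3 by simp
  then show ?thesis using step wfB polB rkB bdB by blast
qed




lemma c2_build:
  assumes wfl: "wfl A" and pol: "polar A \<pi>" and rk: "ranked A \<rho>" and bd: "bound R A \<pi> \<rho>"
    and red: "c2_red A \<pi>"
  shows "\<exists>B \<pi>' \<rho>'. c_step A B \<and> wfl B \<and> polar B \<pi>' \<and> ranked B \<rho>' \<and> bound R B \<pi>' \<rho>' \<and>
           W R B \<pi>' \<rho>' < W R A \<pi> \<rho>"
proof -
  obtain i e4 k where i: "i \<in> fV A" "lab A i = Interaction" and e4: "e4 \<in> fE A" "up A e4 = Nd i" "lo A e4 = Nd k"
    and k: "k \<in> fV A" "lab A k = Cocontraction" and pe: "\<pi> e4"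
    using red unfolding c2_red_def by blast
  have finV: "finite (fV A)" and finE: "finite (fE A)" using wfl unfolding wfl_def by auto
  have Uk: "upper_edges A k = {e4}"
    using card1_eq[OF wf_finU[OF wfl] _ upper_edgesI[OF e4(1,3)]] wf_cardU[OF wfl k(1)] k(2) by simp
  obtain e1 e2 where e12: "e1 \<noteq> e2" "lower_edges A k = {e1, e2}"
    using card2_get wf_cardL[OF wfl k(1)] k(2) by (metis n_lower.simps(6))
  obtain e3 where e3: "e3 \<noteq> e4" "lower_edges A i = {e4, e3}"
    using card2_other[OF wf_finL[OF wfl] _ lower_edgesI[OF e4(1,2)]] wf_cardL[OF wfl i(1)] i(2)
    by (metis n_lower.simps(1))
  have Ui: "upper_edges A i = {}" using wf_cardU[OF wfl i(1)] i(2) wf_finU[OF wfl] by simp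
  have E1: "e1 \<in> fE A" "up A e1 = Nd k" "e2 \<in> fE A" "up A e2 = Nd k"
    using e12 unfolding lower_edges_def by auto
  have E3: "e3 \<in> fE A" "up A e3 = Nd i" using e3 unfolding lower_edges_def by auto
  have ik: "i \<noteq> k" using i k by auto
  have ne: "e1 \<noteq> e4" "e2 \<noteq> e4" "e3 \<noteq> e1" "e3 \<noteq> e2" using E1 E3 e4 ik by auto
  define g' where "g' = Suc (Max (insert 0 (fV A)))"
  define i1 where "i1 = g' + 1"
  define i2 where "i2 = g' + 2"
  have fr: "g' \<notin> fV A" "i1 \<notin> fV A" "i2 \<notin> fV A"
    using fresh_nat[OF finV, of 0] fresh_nat[OF finV, of 1] fresh_nat[OF finV, of 2]
    unfolding g'_def i1_def i2_def by auto
  have nv: "g' \<noteq> i1" "g' \<noteq> i2" "i1 \<noteq> i2" unfolding i1_def i2_def by auto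
  define d1 where "d1 = Suc (Max (insert 0 (fE A)))"
  define d2 where "d2 = d1 + 1"
  have frd: "d1 \<notin> fE A" "d2 \<notin> fE A"
    using fresh_nat[OF finE, of 0] fresh_nat[OF finE, of 1] unfolding d1_def d2_def by auto
  have nd: "d1 \<noteq> d2" "d1 \<noteq> e4" "d2 \<noteq> e4" "d1 \<noteq> e1" "d2 \<noteq> e1" "d1 \<noteq> e2" "d2 \<noteq> e2"
    "d1 \<noteq> e3" "d2 \<noteq> e3"
    using frd e4(1) E1 E3 unfolding d2_def by auto
  define B where "B = A\<lparr> fV := (fV A - {i, k}) \<union> {g', i1, i2},
            fE := (fE A - {e4}) \<union> {d1, d2},
            lab := (lab A)(g' := Contraction, i1 := Interaction, i2 := Interaction),
            up := (up A)(e3 := Nd g', e1 := Nd i1, d1 := Nd i1, e2 := Nd i2, d2 := Nd i2),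
            lo := (lo A)(d1 := Nd g', d2 := Nd g') \<rparr>"
  have BV: "fV B = (fV A - {i, k}) \<union> {g', i1, i2}" and BE: "fE B = (fE A - {e4}) \<union> {d1, d2}"
    and Blab: "lab B = (lab A)(g' := Contraction, i1 := Interaction, i2 := Interaction)"
    and Bup: "up B = (up A)(e3 := Nd g', e1 := Nd i1, d1 := Nd i1, e2 := Nd i2, d2 := Nd i2)"
    and Blo: "lo B = (lo A)(d1 := Nd g', d2 := Nd g')"
    unfolding B_def by simp_all
  have step: "c_step A B"
    unfolding c_step_def c2_step_def
    apply (rule disjI2, rule disjI1)
    apply (rule exI[of _ i], rule exI[of _ k], rule exI[of _ e1], rule exI[of _ e2], rule exI[of _ e3],
        rule exI[of _ e4], rule exI[of _ g'], rule exI[of _ i1], rule exI[of _ i2], rule exI[of _ d1],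
        rule exI[of _ d2])
    using i k e4 E1 E3 e12 e3 fr nv frd nd unfolding B_def by simp
  have oldU: "upper_edges B v = upper_edges A v" if v: "v \<in> fV A" "v \<noteq> i" "v \<noteq> k" for v
  proof -
    have "lo A e4 \<noteq> Nd v" using e4 v by auto
    moreover have "Nd g' \<noteq> Nd v" using fr v by auto
    ultimately show ?thesis unfolding upper_edges_def BE Blo using nd frd by auto
  qed
  have oldL: "lower_edges B v = lower_edges A v" if v: "v \<in> fV A" "v \<noteq> i" "v \<noteq> k" for v
  proof -
    have "up A e4 \<noteq> Nd v" "up A e1 \<noteq> Nd v" "up A e2 \<noteq> Nd v" "up A e3 \<noteq> Nd v" using e4 E1 E3 v by auto
    moreover have "Nd g' \<noteq> Nd v" "Nd i1 \<noteq> Nd v" "Nd i2 \<noteq> Nd v" using fr v by auto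
    ultimately show ?thesis unfolding lower_edges_def BE Bup using nd frd ne by auto
  qed
  have oldlab: "lab B v = lab A v" if "v \<in> fV A" for v using that fr unfolding Blab by auto
  have Lg': "lower_edges B g' = {e3}"
  proof -
    have "\<forall>y\<in>fE A. up A y \<noteq> Nd g'" using up_fresh[OF wfl] fr by blast
    then show ?thesis unfolding lower_edges_def BE Bup using nd frd ne nv E3 e3 by auto
  qed
  have Ug': "upper_edges B g' = {d1, d2}"
  proof -
    have "\<forall>y\<in>fE A. lo A y \<noteq> Nd g'" using lo_fresh[OF wfl] fr by blast
    then show ?thesis unfolding upper_edges_def BE Blo using nd frd by auto
  qed
  have Li1: "lower_edges B i1 = {e1, d1}"
  proof -
    have "\<forall>y\<in>fE A. up A y \<noteq> Nd i1" using up_fresh[OF wfl] fr by blast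
    then show ?thesis unfolding lower_edges_def BE Bup using nd frd ne nv E1 e12(1) by auto
  qed
  have Li2: "lower_edges B i2 = {e2, d2}"
  proof -
    have "\<forall>y\<in>fE A. up A y \<noteq> Nd i2" using up_fresh[OF wfl] fr by blast
    then show ?thesis unfolding lower_edges_def BE Bup using nd frd ne nv E1 e12(1) by auto
  qed
  have Ui1: "upper_edges B i1 = {}"
  proof -
    have "\<forall>y\<in>fE A. lo A y \<noteq> Nd i1" using lo_fresh[OF wfl] fr by blast
    then show ?thesis unfolding upper_edges_def BE Blo using nd frd nv by auto
  qed
  have Ui2: "upper_edges B i2 = {}"
  proof -
    have "\<forall>y\<in>fE A. lo A y \<noteq> Nd i2" using lo_fresh[OF wfl] fr by blast
    then show ?thesis unfolding upper_edges_def BE Blo using nd frd nv by auto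
  qed
  have labnew: "lab B g' = Contraction" "lab B i1 = Interaction" "lab B i2 = Interaction"
    unfolding Blab using nv by auto
  have wfB: "wfl B"
  proof -
    have fin: "finite (fV B)" "finite (fE B)" unfolding BV BE using finV finE by auto
    have ends: "\<forall>y\<in>fE B. up B y \<in> insert Top (Nd ` fV B) \<and> lo B y \<in> insert Bot (Nd ` fV B)"
    proof
      fix y assume y: "y \<in> fE B"
      show "up B y \<in> insert Top (Nd ` fV B) \<and> lo B y \<in> insert Bot (Nd ` fV B)"
      proof (cases "y \<in> {d1, d2}")
        case True
        then show ?thesis unfolding Bup Blo BV using nd ne by auto
      next
        case False
        then have yA: "y \<in> fE A" "y \<noteq> e4" "y \<noteq> d1" "y \<noteq> d2" using y unfolding BE by auto
        have loB: "lo B y = lo A y" unfolding Blo using yA by simp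
        have "lo A y \<in> insert Bot (Nd ` fV A)" using wfl yA unfolding wfl_def by auto
        moreover have "lo A y \<noteq> Nd i" using Ui yA unfolding upper_edges_def by auto
        moreover have "lo A y \<noteq> Nd k" using Uk yA unfolding upper_edges_def by auto
        ultimately have u: "lo B y \<in> insert Bot (Nd ` fV B)" unfolding loB BV by auto
        have "up B y \<in> insert Top (Nd ` fV B)"
        proof (cases "y \<in> {e1, e2, e3}")
          case True
          then show ?thesis unfolding Bup BV using nd ne e12 by auto
        next
          case False
          then have upB: "up B y = up A y" unfolding Bup using yA by simp
          have "up A y \<in> insert Top (Nd ` fV A)" using wfl yA unfolding wfl_def by auto
          moreover have "up A y \<noteq> Nd k" using e12 yA False unfolding lower_edges_def by auto
          moreover have "up A y \<noteq> Nd i" using e3 yA False unfolding lower_edges_def by auto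
          ultimately show ?thesis unfolding upB BV by auto
        qed
        then show ?thesis using u by simp
      qed
    qed
    have cards: "\<forall>v\<in>fV B. card (upper_edges B v) = n_upper (lab B v) \<and> card (lower_edges B v) = n_lower (lab B v)"
    proof
      fix v assume v: "v \<in> fV B"
      show "card (upper_edges B v) = n_upper (lab B v) \<and> card (lower_edges B v) = n_lower (lab B v)"
      proof (cases "v \<in> {g', i1, i2}")
        case True
        then show ?thesis using Lg' Ug' Li1 Li2 Ui1 Ui2 labnew nd ne e12 by auto
      next
        case False
        then have vA: "v \<in> fV A" "v \<noteq> i" "v \<noteq> k" using v unfolding BV by auto
        then show ?thesis using oldU[OF vA] oldL[OF vA] oldlab[OF vA(1)] wf_cardU[OF wfl vA(1)] wf_cardL[OF wfl vA(1)]
          by simp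
      qed
    qed
    show ?thesis unfolding wfl_def using fin ends cards by blast
  qed
  define \<pi>' where "\<pi>' = \<pi>(d1 := \<pi> e3, d2 := \<pi> e3)"
  have \<pi>old: "\<forall>x\<in>fE A. \<pi>' x = \<pi> x" unfolding \<pi>'_def using frd by auto
  have pe1: "\<pi> e1 = \<pi> e4" "\<pi> e2 = \<pi> e4"
    using polar_same[OF pol k(1)] k(2) e12 Uk by auto
  have pe3: "\<pi> e3 \<noteq> \<pi> e4"
    using polar_diff[OF pol i(1)] i(2) e3 by auto
  have polB: "polar B \<pi>'"
    unfolding polar_iff
  proof
    fix v assume v: "v \<in> fV B"
    show "polar_at B \<pi>' v"
    proof (cases "v \<in> {g', i1, i2}")
      case True
      moreover have "polar_at B \<pi>' g'"
        by (rule polar_at_CK[where b = "\<pi> e3"]) (use labnew Ug' Lg' nd in \<open>auto simp: \<pi>'_def\<close>)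
      moreover have "polar_at B \<pi>' i1"
        by (rule polar_at_IC[where x = e1 and y = d1]) (use labnew Ui1 Li1 nd pe1 pe3 in \<open>auto simp: \<pi>'_def\<close>)
      moreover have "polar_at B \<pi>' i2"
        by (rule polar_at_IC[where x = e2 and y = d2]) (use labnew Ui2 Li2 nd pe1 pe3 in \<open>auto simp: \<pi>'_def\<close>)
      ultimately show ?thesis by auto
    next
      case False
      then have vA: "v \<in> fV A" "v \<noteq> i" "v \<noteq> k" using v unfolding BV by auto
      have sub: "upper_edges A v \<union> lower_edges A v \<subseteq> fE A" unfolding upper_edges_def lower_edges_def by auto
      show ?thesis
      proof (rule polar_at_transfer[where \<pi>=\<pi>, OF oldlab[OF vA(1)] oldU[OF vA] oldL[OF vA]])
        show "\<forall>x\<in>upper_edges A v \<union> lower_edges A v. \<pi>' x = \<pi> x" using sub \<pi>old by blast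
        show "polar_at A \<pi> v" using pol vA unfolding polar_iff by blast
      qed
    qed
  qed
  define \<rho>' where "\<rho>' = \<rho>(g' := \<rho> i, i1 := \<rho> i - 1, i2 := \<rho> i - 1)"
  have \<rho>old: "\<rho>' v = \<rho> v" if "v \<in> fV A" for v unfolding \<rho>'_def using fr that by auto
  have rkA: "\<rho> a < \<rho> b" if "y \<in> fE A" "up A y = Nd a" "lo A y = Nd b" for y a b
    using rk that unfolding ranked_def by blast
  have rkB: "ranked B \<rho>'"
    unfolding ranked_def
  proof (intro ballI allI impI)
    fix y a b assume y: "y \<in> fE B" "up B y = Nd a" "lo B y = Nd b"
    show "\<rho>' a < \<rho>' b"
    proof (cases "y \<in> {d1, d2}")
      case True
      then have "b = g'" "a = i1 \<or> a = i2" using y nd unfolding Bup Blo by auto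
      then show ?thesis unfolding \<rho>'_def using nv by auto
    next
      case False
      then have yA: "y \<in> fE A" "y \<noteq> e4" "y \<noteq> d1" "y \<noteq> d2" using y unfolding BE by auto
      have lb: "lo A y = Nd b" using y yA unfolding Blo by simp
      have bA: "b \<in> fV A" using wf_loV[OF wfl yA(1) lb] .
      have rb: "\<rho>' b = \<rho> b" using \<rho>old[OF bA] .
      have rik: "\<rho> i < \<rho> k" using rkA[OF e4] .
      consider "y = e3" | "y = e1" | "y = e2" | "y \<notin> {e1, e2, e3}" by auto
      then show ?thesis
      proof cases
        case 1
        then have "a = g'" using y nd ne unfolding Bup by auto
        then show ?thesis using rb rkA[OF E3(1) E3(2)] lb 1 nv unfolding \<rho>'_def by auto
      next
        case 2
        then have "a = i1" using y nd ne e12(1) unfolding Bup by auto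
        then show ?thesis using rb rkA[OF E1(1) E1(2)] lb 2 nv rik unfolding \<rho>'_def by auto
      next
        case 3
        then have "a = i2" using y nd ne e12 unfolding Bup by auto
        then show ?thesis using rb rkA[OF E1(3) E1(4)] lb 3 nv rik unfolding \<rho>'_def by auto
      next
        case 4
        then have ua: "up A y = Nd a" using y yA unfolding Bup by simp
        have "a \<in> fV A" using wf_upV[OF wfl yA(1) ua] .
        then show ?thesis using rb \<rho>old rkA[OF yA(1) ua lb] by simp
      qed
    qed
  qed
  have posold: "posv B \<pi>' v = posv A \<pi> v" if vA: "v \<in> fV A" "v \<noteq> i" "v \<noteq> k" for v
    by (rule posv_transfer[OF oldL[OF vA]]) (use \<pi>old in \<open>auto simp: lower_edges_def\<close>)
  have posg': "\<not> posv B \<pi>' g'" unfolding posv_def Lg' \<pi>'_def using pe pe3 nd by auto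
  have bdB: "bound R B \<pi>' \<rho>'"
    unfolding bound_def
  proof (intro ballI impI)
    fix v assume v: "v \<in> fV B" "lab B v \<in> {Contraction, Cocontraction}" "posv B \<pi>' v"
    show "0 \<le> \<rho>' v \<and> \<rho>' v \<le> R"
    proof (cases "v \<in> {g', i1, i2}")
      case True
      then show ?thesis using v labnew posg' by auto
    next
      case False
      then have vA: "v \<in> fV A" "v \<noteq> i" "v \<noteq> k" using v unfolding BV by auto
      then show ?thesis using bd v oldlab[OF vA(1)] posold[OF vA] \<rho>old[OF vA(1)] unfolding bound_def by auto
    qed
  qed
  have kK: "k \<in> Kset A \<pi>" unfolding Kset_def posv_def using k e12 pe pe1 by auto
  have CB: "Cset B \<pi>' = Cset A \<pi>"
  proof
    show "Cset B \<pi>' \<subseteq> Cset A \<pi>"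
    proof
      fix v assume "v \<in> Cset B \<pi>'"
      then have v: "v \<in> fV B" "lab B v = Contraction" "posv B \<pi>' v" unfolding Cset_def by auto
      then have "v \<notin> {g', i1, i2}" using labnew posg' by auto
      then have vA: "v \<in> fV A" "v \<noteq> i" "v \<noteq> k" using v unfolding BV by auto
      then show "v \<in> Cset A \<pi>" using v oldlab posold unfolding Cset_def by auto
    qed
    show "Cset A \<pi> \<subseteq> Cset B \<pi>'"
    proof
      fix v assume "v \<in> Cset A \<pi>"
      then have v: "v \<in> fV A" "lab A v = Contraction" "posv A \<pi> v" unfolding Cset_def by auto
      then have "v \<noteq> k" "v \<noteq> i" using k i by auto
      then show "v \<in> Cset B \<pi>'" using v oldlab posold unfolding Cset_def BV by auto
    qed
  qed
  have KB: "Kset B \<pi>' = Kset A \<pi> - {k}"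
  proof
    show "Kset B \<pi>' \<subseteq> Kset A \<pi> - {k}"
    proof
      fix v assume "v \<in> Kset B \<pi>'"
      then have v: "v \<in> fV B" "lab B v = Cocontraction" "posv B \<pi>' v" unfolding Kset_def by auto
      then have "v \<notin> {g', i1, i2}" using labnew by auto
      then have vA: "v \<in> fV A" "v \<noteq> i" "v \<noteq> k" using v unfolding BV by auto
      then show "v \<in> Kset A \<pi> - {k}" using v oldlab posold unfolding Kset_def by auto
    qed
    show "Kset A \<pi> - {k} \<subseteq> Kset B \<pi>'"
    proof
      fix v assume "v \<in> Kset A \<pi> - {k}"
      then have v: "v \<in> fV A" "lab A v = Cocontraction" "posv A \<pi> v" "v \<noteq> k" unfolding Kset_def by auto
      then have "v \<noteq> i" using i by auto
      then show "v \<in> Kset B \<pi>'" using v oldlab posold unfolding Kset_def BV by auto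
    qed
  qed
  have finC: "finite (Cset A \<pi>)" "finite (Kset A \<pi>)" using finV unfolding Cset_def Kset_def by auto
  have CsubV: "Cset A \<pi> \<subseteq> fV A" "Kset A \<pi> \<subseteq> fV A" unfolding Cset_def Kset_def by auto
  have s1: "(\<Sum>v\<in>Cset B \<pi>'. (3::nat) ^ nat (R - \<rho>' v)) = (\<Sum>v\<in>Cset A \<pi>. (3::nat) ^ nat (R - \<rho> v))"
    unfolding CB by (rule sum.cong) (use CsubV \<rho>old in auto)
  have s2: "(\<Sum>v\<in>Kset B \<pi>'. (3::nat) ^ nat (\<rho>' v)) = (\<Sum>v\<in>Kset A \<pi> - {k}. (3::nat) ^ nat (\<rho> v))"
    unfolding KB by (rule sum.cong) (use CsubV \<rho>old in auto)
  have s3: "(\<Sum>v\<in>Kset A \<pi>. (3::nat) ^ nat (\<rho> v)) = 3 ^ nat (\<rho> k) + (\<Sum>v\<in>Kset A \<pi> - {k}. (3::nat) ^ nat (\<rho> v))"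
    using sum.remove[OF finC(2) kK] .
  have "W R B \<pi>' \<rho>' < W R A \<pi> \<rho>" unfolding W_def s1 s2 s3 by simp
  then show ?thesis using step wfB polB rkB bdB by blast
qed




lemma pow3_lt: "(a::nat) < b \<Longrightarrow> 2 * (3::nat) ^ a < 3 ^ b"
proof -
  assume "a < b"
  then have "(3::nat) ^ Suc a \<le> 3 ^ b" by (intro power_increasing) auto
  moreover have "2 * (3::nat) ^ a < 3 ^ Suc a" by simp
  ultimately show ?thesis by linarith
qed

lemma c3_build:
  assumes wfl: "wfl A" and pol: "polar A \<pi>" and rk: "ranked A \<rho>" and bd: "bound R A \<pi> \<rho>"
    and red: "c3_red A \<pi>"
  shows "\<exists>B \<pi>' \<rho>'. c_step A B \<and> wfl B \<and> polar B \<pi>' \<and> ranked B \<rho>' \<and> bound R B \<pi>' \<rho>' \<and>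
           W R B \<pi>' \<rho>' < W R A \<pi> \<rho>"
proof -
  obtain g e k where g: "g \<in> fV A" "lab A g = Contraction" and e: "e \<in> fE A" "up A e = Nd g" "lo A e = Nd k"
    and k: "k \<in> fV A" "lab A k = Cocontraction" and pe: "\<pi> e"
    using red unfolding c3_red_def by blast
  have finV: "finite (fV A)" and finE: "finite (fE A)" using wfl unfolding wfl_def by auto
  have Lg: "lower_edges A g = {e}"
    using card1_eq[OF wf_finL[OF wfl] _ lower_edgesI[OF e(1,2)]] wf_cardL[OF wfl g(1)] g(2) by simp
  have Uk: "upper_edges A k = {e}"
    using card1_eq[OF wf_finU[OF wfl] _ upper_edgesI[OF e(1,3)]] wf_cardU[OF wfl k(1)] k(2) by simp
  obtain e1 e2 where e12: "e1 \<noteq> e2" "upper_edges A g = {e1, e2}"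
    using card2_get wf_cardU[OF wfl g(1)] g(2) by (metis n_upper.simps(5))
  obtain e3 e4 where e34: "e3 \<noteq> e4" "lower_edges A k = {e3, e4}"
    using card2_get wf_cardL[OF wfl k(1)] k(2) by (metis n_lower.simps(6))
  have E1: "e1 \<in> fE A" "lo A e1 = Nd g" "e2 \<in> fE A" "lo A e2 = Nd g"
    using e12 unfolding upper_edges_def by auto
  have E3: "e3 \<in> fE A" "up A e3 = Nd k" "e4 \<in> fE A" "up A e4 = Nd k"
    using e34 unfolding lower_edges_def by auto
  have gk: "g \<noteq> k" using g k by auto
  have rkA: "\<rho> a < \<rho> b" if "y \<in> fE A" "up A y = Nd a" "lo A y = Nd b" for y a b
    using rk that unfolding ranked_def by blast
  have rgk: "\<rho> g < \<rho> k" using rkA[OF e] .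
  have ne: "e1 \<noteq> e" "e2 \<noteq> e" "e3 \<noteq> e" "e4 \<noteq> e" "e1 \<noteq> e3" "e1 \<noteq> e4" "e2 \<noteq> e3" "e2 \<noteq> e4"
  proof -
    show "e1 \<noteq> e" "e2 \<noteq> e" "e3 \<noteq> e" "e4 \<noteq> e" using E1 E3 e gk by auto
    have "\<rho> k < \<rho> g" if "y \<in> fE A" "up A y = Nd k" "lo A y = Nd g" for y using rkA that by blast
    then show "e1 \<noteq> e3" "e1 \<noteq> e4" "e2 \<noteq> e3" "e2 \<noteq> e4" using E1 E3 rgk by fastforce+
  qed
  define k1 where "k1 = Suc (Max (insert 0 (fV A)))"
  define k2 where "k2 = k1 + 1"
  define g3 where "g3 = k1 + 2"
  define g4 where "g4 = k1 + 3"
  have fr: "k1 \<notin> fV A" "k2 \<notin> fV A" "g3 \<notin> fV A" "g4 \<notin> fV A"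
    using fresh_nat[OF finV, of 0] fresh_nat[OF finV, of 1] fresh_nat[OF finV, of 2] fresh_nat[OF finV, of 3]
    unfolding k1_def k2_def g3_def g4_def by auto
  have nv: "k1 \<noteq> k2" "k1 \<noteq> g3" "k1 \<noteq> g4" "k2 \<noteq> g3" "k2 \<noteq> g4" "g3 \<noteq> g4"
    unfolding k2_def g3_def g4_def by auto
  define d13 where "d13 = Suc (Max (insert 0 (fE A)))"
  define d14 where "d14 = d13 + 1"
  define d23 where "d23 = d13 + 2"
  define d24 where "d24 = d13 + 3"
  have frd: "d13 \<notin> fE A" "d14 \<notin> fE A" "d23 \<notin> fE A" "d24 \<notin> fE A"
    using fresh_nat[OF finE, of 0] fresh_nat[OF finE, of 1] fresh_nat[OF finE, of 2] fresh_nat[OF finE, of 3]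
    unfolding d13_def d14_def d23_def d24_def by auto
  have ndd: "d13 \<noteq> d14" "d13 \<noteq> d23" "d13 \<noteq> d24" "d14 \<noteq> d23" "d14 \<noteq> d24" "d23 \<noteq> d24"
    unfolding d14_def d23_def d24_def by auto
  have nd: "d13 \<noteq> e" "d14 \<noteq> e" "d23 \<noteq> e" "d24 \<noteq> e"
    "d13 \<noteq> e1" "d14 \<noteq> e1" "d23 \<noteq> e1" "d24 \<noteq> e1"
    "d13 \<noteq> e2" "d14 \<noteq> e2" "d23 \<noteq> e2" "d24 \<noteq> e2"
    "d13 \<noteq> e3" "d14 \<noteq> e3" "d23 \<noteq> e3" "d24 \<noteq> e3"
    "d13 \<noteq> e4" "d14 \<noteq> e4" "d23 \<noteq> e4" "d24 \<noteq> e4"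
    using frd e(1) E1 E3 by auto
  define B where "B = A\<lparr> fV := (fV A - {g, k}) \<union> {k1, k2, g3, g4},
            fE := (fE A - {e}) \<union> {d13, d14, d23, d24},
            lab := (lab A)(k1 := Cocontraction, k2 := Cocontraction,
                           g3 := Contraction, g4 := Contraction),
            up := (up A)(e3 := Nd g3, e4 := Nd g4,
                         d13 := Nd k1, d14 := Nd k1, d23 := Nd k2, d24 := Nd k2),
            lo := (lo A)(e1 := Nd k1, e2 := Nd k2,
                         d13 := Nd g3, d14 := Nd g4, d23 := Nd g3, d24 := Nd g4) \<rparr>"
  have BV: "fV B = (fV A - {g, k}) \<union> {k1, k2, g3, g4}" and BE: "fE B = (fE A - {e}) \<union> {d13, d14, d23, d24}"
    and Blab: "lab B = (lab A)(k1 := Cocontraction, k2 := Cocontraction, g3 := Contraction, g4 := Contraction)"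
    and Bup: "up B = (up A)(e3 := Nd g3, e4 := Nd g4, d13 := Nd k1, d14 := Nd k1, d23 := Nd k2, d24 := Nd k2)"
    and Blo: "lo B = (lo A)(e1 := Nd k1, e2 := Nd k2, d13 := Nd g3, d14 := Nd g4, d23 := Nd g3, d24 := Nd g4)"
    unfolding B_def by simp_all
  have step: "c_step A B"
    unfolding c_step_def c3_step_def
    apply (rule disjI2, rule disjI2)
    apply (rule exI[of _ g], rule exI[of _ k], rule exI[of _ e1], rule exI[of _ e2], rule exI[of _ e],
        rule exI[of _ e3], rule exI[of _ e4], rule exI[of _ k1], rule exI[of _ k2], rule exI[of _ g3],
        rule exI[of _ g4], rule exI[of _ d13], rule exI[of _ d14], rule exI[of _ d23], rule exI[of _ d24])
    using g k e E1 E3 e12 e34 fr nv frd ndd unfolding B_def by simp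
  have oldU: "upper_edges B v = upper_edges A v" if v: "v \<in> fV A" "v \<noteq> g" "v \<noteq> k" for v
  proof -
    have "lo A e \<noteq> Nd v" "lo A e1 \<noteq> Nd v" "lo A e2 \<noteq> Nd v" using e E1 v by auto
    moreover have "Nd k1 \<noteq> Nd v" "Nd k2 \<noteq> Nd v" "Nd g3 \<noteq> Nd v" "Nd g4 \<noteq> Nd v" using fr v by auto
    ultimately show ?thesis unfolding upper_edges_def BE Blo using nd frd ne by auto
  qed
  have oldL: "lower_edges B v = lower_edges A v" if v: "v \<in> fV A" "v \<noteq> g" "v \<noteq> k" for v
  proof -
    have "up A e \<noteq> Nd v" "up A e3 \<noteq> Nd v" "up A e4 \<noteq> Nd v" using e E3 v by auto
    moreover have "Nd k1 \<noteq> Nd v" "Nd k2 \<noteq> Nd v" "Nd g3 \<noteq> Nd v" "Nd g4 \<noteq> Nd v" using fr v by auto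
    ultimately show ?thesis unfolding lower_edges_def BE Bup using nd frd ne by auto
  qed
  have oldlab: "lab B v = lab A v" if "v \<in> fV A" for v using that fr unfolding Blab by auto
  have noA: "\<forall>y\<in>fE A. lo A y \<noteq> Nd z \<and> up A y \<noteq> Nd z" if "z \<notin> fV A" for z
    using lo_fresh[OF wfl] up_fresh[OF wfl] that by blast
  have Uk1: "upper_edges B k1 = {e1}"
    using noA[OF fr(1)] unfolding upper_edges_def BE Blo using nd ndd frd ne nv E1 e12(1) by auto
  have Lk1: "lower_edges B k1 = {d13, d14}"
    using noA[OF fr(1)] unfolding lower_edges_def BE Bup using nd ndd frd ne nv by auto
  have Uk2: "upper_edges B k2 = {e2}"
    using noA[OF fr(2)] unfolding upper_edges_def BE Blo using nd ndd frd ne nv E1 e12(1) by auto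
  have Lk2: "lower_edges B k2 = {d23, d24}"
    using noA[OF fr(2)] unfolding lower_edges_def BE Bup using nd ndd frd ne nv by auto
  have Ug3: "upper_edges B g3 = {d13, d23}"
    using noA[OF fr(3)] unfolding upper_edges_def BE Blo using nd ndd frd ne nv by auto
  have Lg3: "lower_edges B g3 = {e3}"
    using noA[OF fr(3)] unfolding lower_edges_def BE Bup using nd ndd frd ne nv E3 e34(1) by auto
  have Ug4: "upper_edges B g4 = {d14, d24}"
    using noA[OF fr(4)] unfolding upper_edges_def BE Blo using nd ndd frd ne nv by auto
  have Lg4: "lower_edges B g4 = {e4}"
    using noA[OF fr(4)] unfolding lower_edges_def BE Bup using nd ndd frd ne nv E3 e34(1) by auto
  have labnew: "lab B k1 = Cocontraction" "lab B k2 = Cocontraction" "lab B g3 = Contraction" "lab B g4 = Contraction"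
    unfolding Blab using nv by auto
  have wfB: "wfl B"
  proof -
    have fin: "finite (fV B)" "finite (fE B)" unfolding BV BE using finV finE by auto
    have ends: "\<forall>y\<in>fE B. up B y \<in> insert Top (Nd ` fV B) \<and> lo B y \<in> insert Bot (Nd ` fV B)"
    proof
      fix y assume y: "y \<in> fE B"
      show "up B y \<in> insert Top (Nd ` fV B) \<and> lo B y \<in> insert Bot (Nd ` fV B)"
      proof (cases "y \<in> {d13, d14, d23, d24}")
        case True
        then show ?thesis unfolding Bup Blo BV using nd ndd by auto
      next
        case False
        then have yA: "y \<in> fE A" "y \<noteq> e" "y \<notin> {d13, d14, d23, d24}" using y unfolding BE by auto
        have "up B y \<in> insert Top (Nd ` fV B)"
        proof (cases "y \<in> {e3, e4}")
          case True
          then show ?thesis unfolding Bup BV using nd ne e34 by auto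
        next
          case False
          then have upB: "up B y = up A y" unfolding Bup using yA by simp
          have "up A y \<in> insert Top (Nd ` fV A)" using wfl yA unfolding wfl_def by auto
          moreover have "up A y \<noteq> Nd g" using Lg yA unfolding lower_edges_def by auto
          moreover have "up A y \<noteq> Nd k" using e34 yA False unfolding lower_edges_def by auto
          ultimately show ?thesis unfolding upB BV by auto
        qed
        moreover have "lo B y \<in> insert Bot (Nd ` fV B)"
        proof (cases "y \<in> {e1, e2}")
          case True
          then show ?thesis unfolding Blo BV using nd ne e12 by auto
        next
          case False
          then have loB: "lo B y = lo A y" unfolding Blo using yA by simp
          have "lo A y \<in> insert Bot (Nd ` fV A)" using wfl yA unfolding wfl_def by auto
          moreover have "lo A y \<noteq> Nd g" using e12 yA False unfolding upper_edges_def by auto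
          moreover have "lo A y \<noteq> Nd k" using Uk yA unfolding upper_edges_def by auto
          ultimately show ?thesis unfolding loB BV by auto
        qed
        ultimately show ?thesis by simp
      qed
    qed
    have cards: "\<forall>v\<in>fV B. card (upper_edges B v) = n_upper (lab B v) \<and> card (lower_edges B v) = n_lower (lab B v)"
    proof
      fix v assume v: "v \<in> fV B"
      show "card (upper_edges B v) = n_upper (lab B v) \<and> card (lower_edges B v) = n_lower (lab B v)"
      proof (cases "v \<in> {k1, k2, g3, g4}")
        case True
        then show ?thesis using Uk1 Lk1 Uk2 Lk2 Ug3 Lg3 Ug4 Lg4 labnew ndd by auto
      next
        case False
        then have vA: "v \<in> fV A" "v \<noteq> g" "v \<noteq> k" using v unfolding BV by auto
        then show ?thesis using oldU[OF vA] oldL[OF vA] oldlab[OF vA(1)] wf_cardU[OF wfl vA(1)] wf_cardL[OF wfl vA(1)]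
          by simp
      qed
    qed
    show ?thesis unfolding wfl_def using fin ends cards by blast
  qed
  define \<pi>' where "\<pi>' = \<pi>(d13 := \<pi> e, d14 := \<pi> e, d23 := \<pi> e, d24 := \<pi> e)"
  have \<pi>old: "\<forall>x\<in>fE A. \<pi>' x = \<pi> x" unfolding \<pi>'_def using frd by auto
  have pe1: "\<pi> e1 = \<pi> e" "\<pi> e2 = \<pi> e"
    using polar_same[OF pol g(1)] g(2) e12 Lg by auto
  have pe3: "\<pi> e3 = \<pi> e" "\<pi> e4 = \<pi> e"
    using polar_same[OF pol k(1)] k(2) e34 Uk by auto
  have \<pi>new: "\<pi>' d13 = \<pi> e" "\<pi>' d14 = \<pi> e" "\<pi>' d23 = \<pi> e" "\<pi>' d24 = \<pi> e"
    "\<pi>' e1 = \<pi> e" "\<pi>' e2 = \<pi> e" "\<pi>' e3 = \<pi> e" "\<pi>' e4 = \<pi> e"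
    unfolding \<pi>'_def using ndd nd pe1 pe3 by auto
  have polB: "polar B \<pi>'"
    unfolding polar_iff
  proof
    fix v assume v: "v \<in> fV B"
    show "polar_at B \<pi>' v"
    proof (cases "v \<in> {k1, k2, g3, g4}")
      case True
      moreover have "polar_at B \<pi>' k1"
        by (rule polar_at_CK[where b = "\<pi> e"]) (use labnew Uk1 Lk1 \<pi>new in auto)
      moreover have "polar_at B \<pi>' k2"
        by (rule polar_at_CK[where b = "\<pi> e"]) (use labnew Uk2 Lk2 \<pi>new in auto)
      moreover have "polar_at B \<pi>' g3"
        by (rule polar_at_CK[where b = "\<pi> e"]) (use labnew Ug3 Lg3 \<pi>new in auto)
      moreover have "polar_at B \<pi>' g4"
        by (rule polar_at_CK[where b = "\<pi> e"]) (use labnew Ug4 Lg4 \<pi>new in auto)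
      ultimately show ?thesis by auto
    next
      case False
      then have vA: "v \<in> fV A" "v \<noteq> g" "v \<noteq> k" using v unfolding BV by auto
      have sub: "upper_edges A v \<union> lower_edges A v \<subseteq> fE A" unfolding upper_edges_def lower_edges_def by auto
      show ?thesis
      proof (rule polar_at_transfer[where \<pi>=\<pi>, OF oldlab[OF vA(1)] oldU[OF vA] oldL[OF vA]])
        show "\<forall>x\<in>upper_edges A v \<union> lower_edges A v. \<pi>' x = \<pi> x" using sub \<pi>old by blast
        show "polar_at A \<pi> v" using pol vA unfolding polar_iff by blast
      qed
    qed
  qed
  define \<rho>' where "\<rho>' = \<rho>(k1 := \<rho> g, k2 := \<rho> g, g3 := \<rho> k, g4 := \<rho> k)"
  have \<rho>old: "\<rho>' v = \<rho> v" if "v \<in> fV A" for v unfolding \<rho>'_def using fr that by auto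
  have \<rho>new: "\<rho>' k1 = \<rho> g" "\<rho>' k2 = \<rho> g" "\<rho>' g3 = \<rho> k" "\<rho>' g4 = \<rho> k"
    unfolding \<rho>'_def using nv by auto
  have rkB: "ranked B \<rho>'"
    unfolding ranked_def
  proof (intro ballI allI impI)
    fix y a b assume y: "y \<in> fE B" "up B y = Nd a" "lo B y = Nd b"
    show "\<rho>' a < \<rho>' b"
    proof (cases "y \<in> {d13, d14, d23, d24}")
      case True
      then have "a = k1 \<or> a = k2" "b = g3 \<or> b = g4" using y ndd unfolding Bup Blo by auto
      then show ?thesis using \<rho>new rgk by auto
    next
      case False
      then have yA: "y \<in> fE A" "y \<noteq> e" "y \<notin> {d13, d14, d23, d24}" using y unfolding BE by auto
      have ra: "\<rho>' a < \<rho> g" if "y \<in> {e1, e2}"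
      proof -
        have ua: "up A y = Nd a" using y yA that ne unfolding Bup by auto
        have "a \<in> fV A" using wf_upV[OF wfl yA(1) ua] .
        then show ?thesis using \<rho>old rkA[OF yA(1) ua] that E1 by auto
      qed
      have rb: "\<rho> k < \<rho>' b" if "y \<in> {e3, e4}"
      proof -
        have lb: "lo A y = Nd b" using y yA that ne unfolding Blo by auto
        have "b \<in> fV A" using wf_loV[OF wfl yA(1) lb] .
        then show ?thesis using \<rho>old rkA[OF yA(1) _ lb] that E3 by auto
      qed
      consider "y \<in> {e1, e2}" | "y \<in> {e3, e4}" | "y \<notin> {e1, e2, e3, e4}" by auto
      then show ?thesis
      proof cases
        case 1
        then have "b = k1 \<or> b = k2" using y yA e12(1) unfolding Blo by auto
        then show ?thesis using ra[OF 1] \<rho>new by auto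
      next
        case 2
        then have "a = g3 \<or> a = g4" using y yA e34(1) ne unfolding Bup by auto
        then show ?thesis using rb[OF 2] \<rho>new by auto
      next
        case 3
        then have ua: "up A y = Nd a" and lb: "lo A y = Nd b" using y yA unfolding Bup Blo by auto
        have "a \<in> fV A" "b \<in> fV A" using wf_upV[OF wfl yA(1) ua] wf_loV[OF wfl yA(1) lb] .
        then show ?thesis using \<rho>old rkA[OF yA(1) ua lb] by simp
      qed
    qed
  qed
  have posold: "posv B \<pi>' v = posv A \<pi> v" if vA: "v \<in> fV A" "v \<noteq> g" "v \<noteq> k" for v
    by (rule posv_transfer[OF oldL[OF vA]]) (use \<pi>old in \<open>auto simp: lower_edges_def\<close>)
  have posnew: "posv B \<pi>' k1" "posv B \<pi>' k2" "posv B \<pi>' g3" "posv B \<pi>' g4"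
    unfolding posv_def using Lk1 Lk2 Lg3 Lg4 \<pi>new pe by auto
  have gpos: "posv A \<pi> g" "posv A \<pi> k" unfolding posv_def using Lg e34 pe pe3 by auto
  have bg: "0 \<le> \<rho> g" "\<rho> g \<le> R" "0 \<le> \<rho> k" "\<rho> k \<le> R"
    using bd g k gpos unfolding bound_def by auto
  have bdB: "bound R B \<pi>' \<rho>'"
    unfolding bound_def
  proof (intro ballI impI)
    fix v assume v: "v \<in> fV B" "lab B v \<in> {Contraction, Cocontraction}" "posv B \<pi>' v"
    show "0 \<le> \<rho>' v \<and> \<rho>' v \<le> R"
    proof (cases "v \<in> {k1, k2, g3, g4}")
      case True
      then show ?thesis using \<rho>new bg by auto
    next
      case False
      then have vA: "v \<in> fV A" "v \<noteq> g" "v \<noteq> k" using v unfolding BV by auto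
      then show ?thesis using bd v oldlab[OF vA(1)] posold[OF vA] \<rho>old[OF vA(1)] unfolding bound_def by auto
    qed
  qed
  have gC: "g \<in> Cset A \<pi>" and kK: "k \<in> Kset A \<pi>" unfolding Cset_def Kset_def using g k gpos by auto
  have CB: "Cset B \<pi>' = insert g3 (insert g4 (Cset A \<pi> - {g}))"
  proof
    show "Cset B \<pi>' \<subseteq> insert g3 (insert g4 (Cset A \<pi> - {g}))"
    proof
      fix v assume "v \<in> Cset B \<pi>'"
      then have v: "v \<in> fV B" "lab B v = Contraction" "posv B \<pi>' v" unfolding Cset_def by auto
      show "v \<in> insert g3 (insert g4 (Cset A \<pi> - {g}))"
      proof (cases "v \<in> {k1, k2, g3, g4}")
        case True then show ?thesis using v labnew by auto
      next
        case False
        then have vA: "v \<in> fV A" "v \<noteq> g" "v \<noteq> k" using v unfolding BV by auto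
        then show ?thesis using v oldlab posold unfolding Cset_def by auto
      qed
    qed
    show "insert g3 (insert g4 (Cset A \<pi> - {g})) \<subseteq> Cset B \<pi>'"
    proof
      fix v assume "v \<in> insert g3 (insert g4 (Cset A \<pi> - {g}))"
      then consider "v = g3" | "v = g4" | "v \<in> Cset A \<pi> - {g}" by auto
      then show "v \<in> Cset B \<pi>'"
      proof cases
        case 3
        then have v: "v \<in> fV A" "lab A v = Contraction" "posv A \<pi> v" "v \<noteq> g" unfolding Cset_def by auto
        then have "v \<noteq> k" using k by auto
        then show ?thesis using v oldlab posold unfolding Cset_def BV by auto
      qed (use labnew posnew in \<open>auto simp: Cset_def BV\<close>)
    qed
  qed
  have KB: "Kset B \<pi>' = insert k1 (insert k2 (Kset A \<pi> - {k}))"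
  proof
    show "Kset B \<pi>' \<subseteq> insert k1 (insert k2 (Kset A \<pi> - {k}))"
    proof
      fix v assume "v \<in> Kset B \<pi>'"
      then have v: "v \<in> fV B" "lab B v = Cocontraction" "posv B \<pi>' v" unfolding Kset_def by auto
      show "v \<in> insert k1 (insert k2 (Kset A \<pi> - {k}))"
      proof (cases "v \<in> {k1, k2, g3, g4}")
        case True then show ?thesis using v labnew by auto
      next
        case False
        then have vA: "v \<in> fV A" "v \<noteq> g" "v \<noteq> k" using v unfolding BV by auto
        then show ?thesis using v oldlab posold unfolding Kset_def by auto
      qed
    qed
    show "insert k1 (insert k2 (Kset A \<pi> - {k})) \<subseteq> Kset B \<pi>'"
    proof
      fix v assume "v \<in> insert k1 (insert k2 (Kset A \<pi> - {k}))"
      then consider "v = k1" | "v = k2" | "v \<in> Kset A \<pi> - {k}" by auto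
      then show "v \<in> Kset B \<pi>'"
      proof cases
        case 3
        then have v: "v \<in> fV A" "lab A v = Cocontraction" "posv A \<pi> v" "v \<noteq> k" unfolding Kset_def by auto
        then have "v \<noteq> g" using g by auto
        then show ?thesis using v oldlab posold unfolding Kset_def BV by auto
      qed (use labnew posnew in \<open>auto simp: Kset_def BV\<close>)
    qed
  qed
  have finC: "finite (Cset A \<pi>)" "finite (Kset A \<pi>)" using finV unfolding Cset_def Kset_def by auto
  have CsubV: "Cset A \<pi> \<subseteq> fV A" "Kset A \<pi> \<subseteq> fV A" unfolding Cset_def Kset_def by auto
  have nin: "g3 \<notin> Cset A \<pi> - {g}" "g4 \<notin> Cset A \<pi> - {g}" "k1 \<notin> Kset A \<pi> - {k}" "k2 \<notin> Kset A \<pi> - {k}"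
    using CsubV fr by auto
  define SC where "SC = (\<Sum>v\<in>Cset A \<pi> - {g}. (3::nat) ^ nat (R - \<rho> v))"
  define SK where "SK = (\<Sum>v\<in>Kset A \<pi> - {k}. (3::nat) ^ nat (\<rho> v))"
  have s1: "(\<Sum>v\<in>Cset B \<pi>'. (3::nat) ^ nat (R - \<rho>' v)) = 2 * 3 ^ nat (R - \<rho> k) + SC"
  proof -
    have "(\<Sum>v\<in>Cset A \<pi> - {g}. (3::nat) ^ nat (R - \<rho>' v)) = SC"
      unfolding SC_def by (rule sum.cong) (use CsubV \<rho>old in auto)
    then show ?thesis unfolding CB using finC nin nv \<rho>new by simp
  qed
  have s2: "(\<Sum>v\<in>Kset B \<pi>'. (3::nat) ^ nat (\<rho>' v)) = 2 * 3 ^ nat (\<rho> g) + SK"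
  proof -
    have "(\<Sum>v\<in>Kset A \<pi> - {k}. (3::nat) ^ nat (\<rho>' v)) = SK"
      unfolding SK_def by (rule sum.cong) (use CsubV \<rho>old in auto)
    then show ?thesis unfolding KB using finC nin nv \<rho>new by simp
  qed
  have s3: "(\<Sum>v\<in>Cset A \<pi>. (3::nat) ^ nat (R - \<rho> v)) = 3 ^ nat (R - \<rho> g) + SC"
    unfolding SC_def using sum.remove[OF finC(1) gC] .
  have s4: "(\<Sum>v\<in>Kset A \<pi>. (3::nat) ^ nat (\<rho> v)) = 3 ^ nat (\<rho> k) + SK"
    unfolding SK_def using sum.remove[OF finC(2) kK] .
  have l1: "2 * (3::nat) ^ nat (R - \<rho> k) < 3 ^ nat (R - \<rho> g)" by (rule pow3_lt) (use bg rgk in auto)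
  have l2: "2 * (3::nat) ^ nat (\<rho> g) < 3 ^ nat (\<rho> k)" by (rule pow3_lt) (use bg rgk in auto)
  have "W R B \<pi>' \<rho>' < W R A \<pi> \<rho>" unfolding W_def s1 s2 s3 s4 using l1 l2 by simp
  then show ?thesis using step wfB polB rkB bdB by blast
qed




lemma main_ind:
  "\<forall>G \<pi> \<rho>. W R G \<pi> \<rho> = m \<longrightarrow> wfl G \<longrightarrow> polar G \<pi> \<longrightarrow> ranked G \<rho> \<longrightarrow> bound R G \<pi> \<rho> \<longrightarrow>
     (\<exists>B. c_step\<^sup>*\<^sup>* G B \<and> atomic_flow B \<and> (\<forall>v xs. aicycle B v xs \<longrightarrow> fragile_cycle B v xs))"
proof (induction m rule: less_induct)
  case (less m)
  show ?case
  proof (intro allI impI)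
    fix G \<pi> \<rho>
    assume Wm: "W R G \<pi> \<rho> = m" and wfl: "wfl G" and pol: "polar G \<pi>" and rk: "ranked G \<rho>" and bd: "bound R G \<pi> \<rho>"
    show "\<exists>B. c_step\<^sup>*\<^sup>* G B \<and> atomic_flow B \<and> (\<forall>v xs. aicycle B v xs \<longrightarrow> fragile_cycle B v xs)"
    proof (cases "c1_red G \<pi> \<or> c2_red G \<pi> \<or> c3_red G \<pi>")
      case True
      then obtain B1 \<pi>' \<rho>' where B1: "c_step G B1" "wfl B1" "polar B1 \<pi>'" "ranked B1 \<rho>'" "bound R B1 \<pi>' \<rho>'"
        "W R B1 \<pi>' \<rho>' < W R G \<pi> \<rho>"
        using c1_build[OF wfl pol rk bd] c2_build[OF wfl pol rk bd] c3_build[OF wfl pol rk bd] by blast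
      then obtain B where B: "c_step\<^sup>*\<^sup>* B1 B" "atomic_flow B" "\<forall>v xs. aicycle B v xs \<longrightarrow> fragile_cycle B v xs"
        using less.IH[of "W R B1 \<pi>' \<rho>'"] Wm by blast
      have "c_step\<^sup>*\<^sup>* G B" using B(1) B1(1) by (meson converse_rtranclp_into_rtranclp)
      then show ?thesis using B by blast
    next
      case False
      have af: "atomic_flow G" unfolding atomic_iff using wfl ranked_acyclic[OF rk] pol by blast
      have "\<forall>v xs. aicycle G v xs \<longrightarrow> fragile_cycle G v xs"
      proof (intro allI impI)
        fix v xs assume c: "aicycle G v xs"
        then have vV: "v \<in> fV G" and ap: "aipath G v xs v" and d: "distinct xs" unfolding aicycle_def by auto
        obtain ds where "walk G v xs ds v" using aipath_walk[OF ap] by blast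
        then have "\<exists>e\<in>set xs. simple_edge G e"
          using cycle_fragile[OF wfl pol ranked_acyclic[OF rk]] False vV d by blast
        then show "fragile_cycle G v xs" using c unfolding fragile_cycle_def by blast
      qed
      then show ?thesis using af by blast
    qed
  qed
qed

theorem theorem4p24:
  assumes "atomic_flow A"
  shows "\<exists>B. atomic_flow B \<and> c_step\<^sup>*\<^sup>* A B \<and>
              (\<forall>v xs. aicycle B v xs \<longrightarrow> fragile_cycle B v xs)"
proof -
  obtain \<pi> where wfl: "wfl A" and acy: "acyclic (grel A)" and pol: "polar A \<pi>"
    using assms unfolding atomic_iff by blast
  define \<rho> where "\<rho> = (\<lambda>x. int (card {y. (y, x) \<in> (grel A)\<^sup>+}))"
  have rk: "ranked A \<rho>" unfolding \<rho>_def using acyclic_ranked[OF wfl acy] .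
  define R where "R = Max (insert 0 (\<rho> ` fV A))"
  have fin: "finite (fV A)" using wfl unfolding wfl_def by auto
  have bd: "bound R A \<pi> \<rho>"
    unfolding bound_def
  proof (intro ballI impI)
    fix v assume "v \<in> fV A"
    then have "\<rho> v \<le> R" unfolding R_def using fin by (simp add: Max_ge)
    moreover have "0 \<le> \<rho> v" unfolding \<rho>_def by simp
    ultimately show "0 \<le> \<rho> v \<and> \<rho> v \<le> R" by simp
  qed
  show ?thesis using main_ind[of R "W R A \<pi> \<rho>"] wfl pol rk bd by blast
qed


end
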